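(* Let $n\ge3$, let $p:[\mathcal Q:\xi]\to[\mathcal H:\partial]$ be a trivial fibration and $f:[\mathcal Q:\xi]\to[\mathcal G:\delta]$ a morphism of reduced $n$-crossed complexes, and let $\nabla^f=(p,f):\mathcal Q\to\mathcal H\times\mathcal G$. Then the composite $\pi_1\circ\rho:\mathcal Q^{\nabla^f_n}\to\mathcal H\times\mathcal G\to\mathcal H$ (where $\pi_1$ is the projection) is a trivial fibration.
   Context: A reduced $n$-crossed complex $[C:\partial]$ is a sequence of groups and homomorphisms $C_n\xrightarrow{\partial_n}C_{n-1}\to\cdots\to C_2\xrightarrow{\partial_2}C_1$ together with an action of $C_1$ on each $C_k$ ($k\ge2$), such that $\partial_2:C_2\to C_1$ is a crossed module, $C_k$ is abelian for $k\ge3$, each $\partial_k$ is $C_1$-equivariant, $\partial_{k-1}\partial_k$ is trivial, and $\partial_2(C_2)$ acts trivially on $C_k$ for $k\ge3$. Morphisms are families of homomorphisms commuting with differentials and actions; products are degreewise. Homotopy groups: $\pi_1(C)=C_1/\partial_2(C_2)$, $\pi_k(C)=\ker\partial_k/\partial_{k+1}(C_{k+1})$ for $2\le k\le n-1$, $\pi_n(C)=\ker\partial_n$. A weak equivalence induces isomorphisms on all $\pi_k$, $1\le k\le n$; a fibration is surjective in every degree; a trivial fibration is both. The $n$-pushout: given $\nabla:[\mathcal Q:\xi]\to[\mathcal K:\kappa]$ (here $\mathcal K=\mathcal H\times\mathcal G$, $\nabla=(p,f)$), $\mathcal Q^{\nabla_n}$ equals $\mathcal Q$ in degrees $\le n-2$,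 has degree $n$ group $\mathcal K_n$ and degree $n-1$ group $P=\mathcal Q_{n-1}\times^{\mathcal Q_n}\mathcal K_n$, the quotient of the (semi)direct product $\mathcal Q_{n-1}\ltimes\mathcal K_n$ (for $n=3$, $\mathcal Q_2$ acts on $\mathcal K_3$ via $\nabla_1\circ\xi_2$; for $n\ge4$ the product is direct) by the normal subgroup of elements $(\xi_n(x)^{-1},\nabla_n(x))$, $x\in\mathcal Q_n$; elements are written $[a,(b,c)]$. Differentials: $(b,c)\mapsto[1,(b,c)]$ and $[a,(b,c)]\mapsto\xi_{n-1}(a)$. The canonical morphism $\rho:\mathcal Q^{\nabla_n}\to\mathcal K$ is the identity in degree $n$, $[a,(b,c)]\mapsto\nabla_{n-1}(a)\kappa_n(b,c)$ in degree $n-1$, and $\nabla_k$ in degrees $\le n-2$; the canonical $\iota:\mathcal Q\to\mathcal Q^{\nabla_n}$ is $\nabla_n$ in degree $n$, $a\mapsto[a,(1,1)]$ in degree $n-1$, identity below, and $\rho\circ\iota=\nabla$. *)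

theory Defs
  imports "HOL-Algebra.Coset"
begin

text \<open>A (reduced) n-crossed complex: degree k group, boundary d_k : C_k -> C_(k-1),
  action of C_1 on C_k (k >= 2). Only degrees 1..n are meaningful.\<close>
record 'a xcx =
  xgrp :: "nat \<Rightarrow> 'a monoid"
  xbd  :: "nat \<Rightarrow> 'a \<Rightarrow> 'a"
  xact :: "nat \<Rightarrow> 'a \<Rightarrow> 'a \<Rightarrow> 'a"

definition rxc :: "nat \<Rightarrow> 'a xcx \<Rightarrow> bool" where
  "rxc n C \<longleftrightarrow>
     (\<forall>k\<in>{1..n}. group (xgrp C k)) \<and>
     (\<forall>k\<in>{3..n}. comm_group (xgrp C k)) \<and>
     (\<forall>k\<in>{2..n}. xbd C k \<in> hom (xgrp C k) (xgrp C (k-1))) \<and>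
     \<comment> \<open>C_1 acts on each C_k (k >= 2) by group automorphisms\<close>
     (\<forall>k\<in>{2..n}. \<forall>x\<in>carrier (xgrp C 1). xact C k x \<in> hom (xgrp C k) (xgrp C k)) \<and>
     (\<forall>k\<in>{2..n}. \<forall>c\<in>carrier (xgrp C k). xact C k \<one>\<^bsub>xgrp C 1\<^esub> c = c) \<and>
     (\<forall>k\<in>{2..n}. \<forall>x\<in>carrier (xgrp C 1). \<forall>y\<in>carrier (xgrp C 1). \<forall>c\<in>carrier (xgrp C k).
        xact C k (x \<otimes>\<^bsub>xgrp C 1\<^esub> y) c = xact C k x (xact C k y c)) \<and>
     \<comment> \<open>d_2 : C_2 -> C_1 is a crossed module\<close>
     (\<forall>x\<in>carrier (xgrp C 1). \<forall>c\<in>carrier (xgrp C 2).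
        xbd C 2 (xact C 2 x c) = x \<otimes>\<^bsub>xgrp C 1\<^esub> xbd C 2 c \<otimes>\<^bsub>xgrp C 1\<^esub> inv\<^bsub>xgrp C 1\<^esub> x) \<and>
     (\<forall>c\<in>carrier (xgrp C 2). \<forall>c'\<in>carrier (xgrp C 2).
        xact C 2 (xbd C 2 c) c' = c \<otimes>\<^bsub>xgrp C 2\<^esub> c' \<otimes>\<^bsub>xgrp C 2\<^esub> inv\<^bsub>xgrp C 2\<^esub> c) \<and>
     \<comment> \<open>equivariance of d_k, k >= 3\<close>
     (\<forall>k\<in>{3..n}. \<forall>x\<in>carrier (xgrp C 1). \<forall>c\<in>carrier (xgrp C k).
        xbd C k (xact C k x c) = xact C (k-1) x (xbd C k c)) \<and>
     \<comment> \<open>d_(k-1) d_k trivial\<close>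
     (\<forall>k\<in>{3..n}. \<forall>c\<in>carrier (xgrp C k). xbd C (k-1) (xbd C k c) = \<one>\<^bsub>xgrp C (k-2)\<^esub>) \<and>
     \<comment> \<open>d_2(C_2) acts trivially on C_k, k >= 3\<close>
     (\<forall>k\<in>{3..n}. \<forall>c\<in>carrier (xgrp C 2). \<forall>m\<in>carrier (xgrp C k). xact C k (xbd C 2 c) m = m)"

definition xmor :: "nat \<Rightarrow> 'a xcx \<Rightarrow> 'b xcx \<Rightarrow> (nat \<Rightarrow> 'a \<Rightarrow> 'b) \<Rightarrow> bool" where
  "xmor n C D f \<longleftrightarrow>
     (\<forall>k\<in>{1..n}. f k \<in> hom (xgrp C k) (xgrp D k)) \<and>
     (\<forall>k\<in>{2..n}. \<forall>c\<in>carrier (xgrp C k). f (k-1) (xbd C k c) = xbd D k (f k c)) \<and>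
     (\<forall>k\<in>{2..n}. \<forall>x\<in>carrier (xgrp C 1). \<forall>c\<in>carrier (xgrp C k).
        f k (xact C k x c) = xact D k (f 1 x) (f k c))"

definition pi_low :: "nat \<Rightarrow> 'a xcx \<Rightarrow> nat \<Rightarrow> 'a set monoid" where
  "pi_low n C k =
     (if k = 1 then xgrp C 1
      else (xgrp C k)\<lparr>carrier := kernel (xgrp C k) (xgrp C (k-1)) (xbd C k)\<rparr>)
     Mod (xbd C (k+1) ` carrier (xgrp C (k+1)))"

definition pi_top :: "nat \<Rightarrow> 'a xcx \<Rightarrow> 'a monoid" where
  "pi_top n C = (xgrp C n)\<lparr>carrier := kernel (xgrp C n) (xgrp C (n-1)) (xbd C n)\<rparr>"

definition pi_low_map :: "'b xcx \<Rightarrow> (nat \<Rightarrow> 'a \<Rightarrow> 'b) \<Rightarrow> nat \<Rightarrow> 'a set \<Rightarrow> 'b set" where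
  "pi_low_map D f k A = r_coset (xgrp D k) (xbd D (k+1) ` carrier (xgrp D (k+1))) (f k (SOME a. a \<in> A))"

definition weq :: "nat \<Rightarrow> 'a xcx \<Rightarrow> 'b xcx \<Rightarrow> (nat \<Rightarrow> 'a \<Rightarrow> 'b) \<Rightarrow> bool" where
  "weq n C D f \<longleftrightarrow> xmor n C D f \<and>
     (\<forall>k\<in>{1..<n}. pi_low_map D f k \<in> iso (pi_low n C k) (pi_low n D k)) \<and>
     f n \<in> iso (pi_top n C) (pi_top n D)"

definition fib :: "nat \<Rightarrow> 'a xcx \<Rightarrow> 'b xcx \<Rightarrow> (nat \<Rightarrow> 'a \<Rightarrow> 'b) \<Rightarrow> bool" where
  "fib n C D f \<longleftrightarrow> xmor n C D f \<and> (\<forall>k\<in>{1..n}. f k ` carrier (xgrp C k) = carrier (xgrp D k))"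

definition tfib :: "nat \<Rightarrow> 'a xcx \<Rightarrow> 'b xcx \<Rightarrow> (nat \<Rightarrow> 'a \<Rightarrow> 'b) \<Rightarrow> bool" where
  "tfib n C D f \<longleftrightarrow> fib n C D f \<and> weq n C D f"

definition xprod :: "'a xcx \<Rightarrow> 'b xcx \<Rightarrow> ('a \<times> 'b) xcx" where
  "xprod H G = \<lparr> xgrp = (\<lambda>k. xgrp H k \<times>\<times> xgrp G k),
                 xbd = (\<lambda>k (x, y). (xbd H k x, xbd G k y)),
                 xact = (\<lambda>k (u, v) (x, y). (xact H k u x, xact G k v y)) \<rparr>"

definition npair :: "(nat \<Rightarrow> 'q \<Rightarrow> 'a) \<Rightarrow> (nat \<Rightarrow> 'q \<Rightarrow> 'b) \<Rightarrow> nat \<Rightarrow> 'q \<Rightarrow> 'a \<times> 'b" where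
  "npair p f = (\<lambda>k x. (p k x, f k x))"

definition proj1 :: "nat \<Rightarrow> 'a \<times> 'b \<Rightarrow> 'a" where
  "proj1 = (\<lambda>k. fst)"

definition xcomp :: "(nat \<Rightarrow> 'b \<Rightarrow> 'c) \<Rightarrow> (nat \<Rightarrow> 'a \<Rightarrow> 'b) \<Rightarrow> nat \<Rightarrow> 'a \<Rightarrow> 'c" where
  "xcomp g f = (\<lambda>k x. g k (f k x))"

text \<open>The n-pushout Q^{nabla_n}. Its elements live in a sum type: degrees <= n-2 are
  elements of Q, degree n-1 are classes [a,k] (cosets in Q_(n-1) x| K_n), degree n
  elements of K_n.\<close>
datatype ('q, 'k) po = PLow (lowv: 'q) | PMid (midv: "('q \<times> 'k) set") | PTop (topv: 'k)

definition lift_monoid :: "('a \<Rightarrow> 'b) \<Rightarrow> ('b \<Rightarrow> 'a) \<Rightarrow> ('a, 'c) monoid_scheme \<Rightarrow> 'b monoid" where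
  "lift_monoid \<phi> \<psi> G = \<lparr> carrier = \<phi> ` carrier G,
                          mult = (\<lambda>x y. \<phi> (\<psi> x \<otimes>\<^bsub>G\<^esub> \<psi> y)),
                          one = \<phi> \<one>\<^bsub>G\<^esub> \<rparr>"

text \<open>Q_(n-1) x| K_n: (a,k)(a',k') = (a a', (a'^-1 . k) k'), where for n = 3 the element
  a' in Q_2 acts on K_3 via nabla_1(xi_2 a'); for n >= 4 this is the direct product.\<close>
definition po_sd :: "nat \<Rightarrow> 'q xcx \<Rightarrow> 'k xcx \<Rightarrow> (nat \<Rightarrow> 'q \<Rightarrow> 'k) \<Rightarrow> ('q \<times> 'k) monoid" where
  "po_sd n Q K nab =
     \<lparr> carrier = carrier (xgrp Q (n-1)) \<times> carrier (xgrp K n),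
       mult = (\<lambda>(a, k) (a', k').
                 (a \<otimes>\<^bsub>xgrp Q (n-1)\<^esub> a',
                  (if n = 3 then xact K n (nab 1 (xbd Q (n-1) (inv\<^bsub>xgrp Q (n-1)\<^esub> a'))) k else k)
                    \<otimes>\<^bsub>xgrp K n\<^esub> k')),
       one = (\<one>\<^bsub>xgrp Q (n-1)\<^esub>, \<one>\<^bsub>xgrp K n\<^esub>) \<rparr>"

definition po_N :: "nat \<Rightarrow> 'q xcx \<Rightarrow> 'k xcx \<Rightarrow> (nat \<Rightarrow> 'q \<Rightarrow> 'k) \<Rightarrow> ('q \<times> 'k) set" where
  "po_N n Q K nab = (\<lambda>x. (inv\<^bsub>xgrp Q (n-1)\<^esub> (xbd Q n x), nab n x)) ` carrier (xgrp Q n)"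

definition po_P :: "nat \<Rightarrow> 'q xcx \<Rightarrow> 'k xcx \<Rightarrow> (nat \<Rightarrow> 'q \<Rightarrow> 'k) \<Rightarrow> ('q \<times> 'k) set monoid" where
  "po_P n Q K nab = po_sd n Q K nab Mod po_N n Q K nab"

definition pushout :: "nat \<Rightarrow> 'q xcx \<Rightarrow> 'k xcx \<Rightarrow> (nat \<Rightarrow> 'q \<Rightarrow> 'k) \<Rightarrow> ('q, 'k) po xcx" where
  "pushout n Q K nab =
    \<lparr> xgrp = (\<lambda>k. if k \<le> n - 2 then lift_monoid PLow lowv (xgrp Q k)
                 else if k = n - 1 then lift_monoid PMid midv (po_P n Q K nab)
                 else lift_monoid PTop topv (xgrp K k)),
      xbd = (\<lambda>k x. if k \<le> n - 2 then PLow (xbd Q k (lowv x))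
                   else if k = n - 1 then PLow (xbd Q (n-1) (fst (SOME p. p \<in> midv x)))
                   else PMid (r_coset (po_sd n Q K nab) (po_N n Q K nab)
                                (\<one>\<^bsub>xgrp Q (n-1)\<^esub>, topv x))),
      xact = (\<lambda>k x c. if k \<le> n - 2 then PLow (xact Q k (lowv x) (lowv c))
                      else if k = n - 1 then
                        PMid ((\<lambda>(a, m). (xact Q (n-1) (lowv x) a, xact K n (nab 1 (lowv x)) m)) ` midv c)
                      else PTop (xact K k (nab 1 (lowv x)) (topv c))) \<rparr>"

definition po_rho :: "nat \<Rightarrow> 'q xcx \<Rightarrow> 'k xcx \<Rightarrow> (nat \<Rightarrow> 'q \<Rightarrow> 'k) \<Rightarrow> nat \<Rightarrow> ('q, 'k) po \<Rightarrow> 'k" where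
  "po_rho n Q K nab k x =
     (if k \<le> n - 2 then nab k (lowv x)
      else if k = n - 1 then
        (case SOME p. p \<in> midv x of (a, m) \<Rightarrow> nab (n-1) a \<otimes>\<^bsub>xgrp K (n-1)\<^esub> xbd K n m)
      else topv x)"

end

theory Submission
  imports Defs
begin


lemma quot_iso:
  assumes gS: "group S" and gT: "group T" and nS: "BS \<lhd> S" and nT: "BT \<lhd> T"
    and hf: "f \<in> hom S T" and fB: "f ` BS \<subseteq> BT"
  shows "(\<lambda>A. BT #>\<^bsub>T\<^esub> f (SOME a. a \<in> A)) \<in> iso (S Mod BS) (T Mod BT) \<longleftrightarrow>
    ((\<forall>y\<in>carrier T. \<exists>x\<in>carrier S. BT #>\<^bsub>T\<^esub> f x = BT #>\<^bsub>T\<^esub> y) \<and>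
     (\<forall>x\<in>carrier S. f x \<in> BT \<longrightarrow> x \<in> BS))"
proof -
  interpret S: group S by fact
  interpret T: group T by fact
  interpret nS: normal BS S by fact
  interpret nT: normal BT T by fact
  interpret h: group_hom S T f using hf by unfold_locales
  define F where "F = (\<lambda>A. BT #>\<^bsub>T\<^esub> f (SOME a. a \<in> A))"
  have Fc: "F (BS #>\<^bsub>S\<^esub> a) = BT #>\<^bsub>T\<^esub> f a" if a: "a \<in> carrier S" for a
  proof -
    have "a \<in> BS #>\<^bsub>S\<^esub> a" using a by (simp add: S.rcos_self nS.subgroup_axioms)
    then have "(SOME w. w \<in> BS #>\<^bsub>S\<^esub> a) \<in> BS #>\<^bsub>S\<^esub> a" by (rule someI)
    then obtain b where b: "b \<in> BS" "(SOME w. w \<in> BS #>\<^bsub>S\<^esub> a) = b \<otimes>\<^bsub>S\<^esub> a"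
      unfolding r_coset_def by auto
    have bc: "b \<in> carrier S" using b nS.subset by auto
    have "F (BS #>\<^bsub>S\<^esub> a) = BT #>\<^bsub>T\<^esub> (f b \<otimes>\<^bsub>T\<^esub> f a)"
      unfolding F_def b(2) using a bc by simp
    also have "\<dots> = (BT #>\<^bsub>T\<^esub> f b) #>\<^bsub>T\<^esub> f a"
      using a bc by (simp add: T.coset_mult_assoc nT.subset)
    also have "BT #>\<^bsub>T\<^esub> f b = BT" using fB b bc
      by (intro T.coset_join2) (auto simp: nT.subgroup_axioms)
    finally show ?thesis .
  qed
  have carS: "carrier (S Mod BS) = (\<lambda>a. BS #>\<^bsub>S\<^esub> a) ` carrier S" by (rule carrier_FactGroup)
  have carT: "carrier (T Mod BT) = (\<lambda>a. BT #>\<^bsub>T\<^esub> a) ` carrier T" by (rule carrier_FactGroup)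
  have hom: "F \<in> hom (S Mod BS) (T Mod BT)"
  proof (rule homI)
    fix X assume "X \<in> carrier (S Mod BS)"
    then obtain a where a: "a \<in> carrier S" "X = BS #>\<^bsub>S\<^esub> a" using carS by auto
    show "F X \<in> carrier (T Mod BT)" using a Fc carT by auto
  next
    fix X Y assume "X \<in> carrier (S Mod BS)" "Y \<in> carrier (S Mod BS)"
    then obtain a b where a: "a \<in> carrier S" "X = BS #>\<^bsub>S\<^esub> a"
      and b: "b \<in> carrier S" "Y = BS #>\<^bsub>S\<^esub> b" using carS by auto
    have "X \<otimes>\<^bsub>S Mod BS\<^esub> Y = BS #>\<^bsub>S\<^esub> (a \<otimes>\<^bsub>S\<^esub> b)"
      using a b by (simp add: nS.rcos_sum)
    then show "F (X \<otimes>\<^bsub>S Mod BS\<^esub> Y) = F X \<otimes>\<^bsub>T Mod BT\<^esub> F Y"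
      using a b by (simp add: Fc nT.rcos_sum)
  qed
  have img: "F ` carrier (S Mod BS) = carrier (T Mod BT) \<longleftrightarrow>
      (\<forall>y\<in>carrier T. \<exists>x\<in>carrier S. BT #>\<^bsub>T\<^esub> f x = BT #>\<^bsub>T\<^esub> y)"
  proof
    assume A: "F ` carrier (S Mod BS) = carrier (T Mod BT)"
    show "\<forall>y\<in>carrier T. \<exists>x\<in>carrier S. BT #>\<^bsub>T\<^esub> f x = BT #>\<^bsub>T\<^esub> y"
    proof
      fix y assume y: "y \<in> carrier T"
      then have "BT #>\<^bsub>T\<^esub> y \<in> F ` carrier (S Mod BS)" using A carT by auto
      then show "\<exists>x\<in>carrier S. BT #>\<^bsub>T\<^esub> f x = BT #>\<^bsub>T\<^esub> y" using carS Fc by auto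
    qed
  next
    assume B: "\<forall>y\<in>carrier T. \<exists>x\<in>carrier S. BT #>\<^bsub>T\<^esub> f x = BT #>\<^bsub>T\<^esub> y"
    show "F ` carrier (S Mod BS) = carrier (T Mod BT)"
    proof
      show "F ` carrier (S Mod BS) \<subseteq> carrier (T Mod BT)" using hom by (auto simp: hom_def)
      show "carrier (T Mod BT) \<subseteq> F ` carrier (S Mod BS)"
      proof
        fix Y assume "Y \<in> carrier (T Mod BT)"
        then obtain y where y: "y \<in> carrier T" "Y = BT #>\<^bsub>T\<^esub> y" using carT by auto
        then obtain x where x: "x \<in> carrier S" "BT #>\<^bsub>T\<^esub> f x = Y" using B by auto
        have "Y = F (BS #>\<^bsub>S\<^esub> x)" using Fc x by simp
        moreover have "BS #>\<^bsub>S\<^esub> x \<in> carrier (S Mod BS)" using carS x by auto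
        ultimately show "Y \<in> F ` carrier (S Mod BS)" by blast
      qed
    qed
  qed
  have inj: "inj_on F (carrier (S Mod BS)) \<longleftrightarrow> (\<forall>x\<in>carrier S. f x \<in> BT \<longrightarrow> x \<in> BS)"
  proof
    assume A: "inj_on F (carrier (S Mod BS))"
    show "\<forall>x\<in>carrier S. f x \<in> BT \<longrightarrow> x \<in> BS"
    proof (intro ballI impI)
      fix x assume x: "x \<in> carrier S" and fx: "f x \<in> BT"
      have "F (BS #>\<^bsub>S\<^esub> x) = BT" using x fx Fc T.coset_join2 nT.subgroup_axioms by auto
      moreover have "F (BS #>\<^bsub>S\<^esub> \<one>\<^bsub>S\<^esub>) = BT" using Fc[of "\<one>\<^bsub>S\<^esub>"] nT.subset by simp
      ultimately have "BS #>\<^bsub>S\<^esub> x = BS #>\<^bsub>S\<^esub> \<one>\<^bsub>S\<^esub>"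
        using A x carS by (auto simp: inj_on_def)
      then have "BS #>\<^bsub>S\<^esub> x = BS" using nS.subset by simp
      then show "x \<in> BS" using S.coset_join1 x nS.subgroup_axioms by blast
    qed
  next
    assume B: "\<forall>x\<in>carrier S. f x \<in> BT \<longrightarrow> x \<in> BS"
    show "inj_on F (carrier (S Mod BS))"
    proof (rule inj_onI)
      fix X Y assume "X \<in> carrier (S Mod BS)" "Y \<in> carrier (S Mod BS)" and E: "F X = F Y"
      then obtain a b where a: "a \<in> carrier S" "X = BS #>\<^bsub>S\<^esub> a"
        and b: "b \<in> carrier S" "Y = BS #>\<^bsub>S\<^esub> b" using carS by auto
      have "BT #>\<^bsub>T\<^esub> f a = BT #>\<^bsub>T\<^esub> f b" using E a b Fc by simp
      then have "f a \<in> BT #>\<^bsub>T\<^esub> f b"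
        using T.repr_independenceD[of BT "f a" "f b"] nT.subgroup_axioms a by auto
      then have "f a \<otimes>\<^bsub>T\<^esub> inv\<^bsub>T\<^esub> f b \<in> BT"
        using nT.rcos_module_imp[OF T.is_group] b by auto
      then have "f (a \<otimes>\<^bsub>S\<^esub> inv\<^bsub>S\<^esub> b) \<in> BT" using a b by simp
      then have "a \<otimes>\<^bsub>S\<^esub> inv\<^bsub>S\<^esub> b \<in> BS" using B a b by auto
      then have "a \<in> BS #>\<^bsub>S\<^esub> b" using nS.rcos_module_rev[OF S.is_group] a b by auto
      then show "X = Y" using a b S.repr_independence nS.subgroup_axioms by metis
    qed
  qed
  show ?thesis unfolding F_def[symmetric] iso_def bij_betw_def using hom img inj by auto
qed



lemma rxc_grp: "rxc n C \<Longrightarrow> 1 \<le> k \<Longrightarrow> k \<le> n \<Longrightarrow> group (xgrp C k)"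
  by (simp add: rxc_def)
lemma rxc_comm: "rxc n C \<Longrightarrow> 3 \<le> k \<Longrightarrow> k \<le> n \<Longrightarrow> comm_group (xgrp C k)"
  by (simp add: rxc_def)
lemma rxc_bd: "rxc n C \<Longrightarrow> 2 \<le> k \<Longrightarrow> k \<le> n \<Longrightarrow> xbd C k \<in> hom (xgrp C k) (xgrp C (k-1))"
  by (simp add: rxc_def)
lemma rxc_act_hom: "rxc n C \<Longrightarrow> 2 \<le> k \<Longrightarrow> k \<le> n \<Longrightarrow> x \<in> carrier (xgrp C 1) \<Longrightarrow>
   xact C k x \<in> hom (xgrp C k) (xgrp C k)"
  by (simp add: rxc_def)
lemma rxc_act_one: "rxc n C \<Longrightarrow> 2 \<le> k \<Longrightarrow> k \<le> n \<Longrightarrow> c \<in> carrier (xgrp C k) \<Longrightarrow>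
   xact C k \<one>\<^bsub>xgrp C 1\<^esub> c = c"
  by (simp add: rxc_def)
lemma rxc_act_comp: "rxc n C \<Longrightarrow> 2 \<le> k \<Longrightarrow> k \<le> n \<Longrightarrow> x \<in> carrier (xgrp C 1) \<Longrightarrow>
   y \<in> carrier (xgrp C 1) \<Longrightarrow> c \<in> carrier (xgrp C k) \<Longrightarrow>
   xact C k (x \<otimes>\<^bsub>xgrp C 1\<^esub> y) c = xact C k x (xact C k y c)"
  by (simp add: rxc_def)
lemma rxc_cm1: "rxc n C \<Longrightarrow> x \<in> carrier (xgrp C 1) \<Longrightarrow> c \<in> carrier (xgrp C 2) \<Longrightarrow>
   xbd C 2 (xact C 2 x c) = x \<otimes>\<^bsub>xgrp C 1\<^esub> xbd C 2 c \<otimes>\<^bsub>xgrp C 1\<^esub> inv\<^bsub>xgrp C 1\<^esub> x"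
  by (simp add: rxc_def)
lemma rxc_cm2: "rxc n C \<Longrightarrow> c \<in> carrier (xgrp C 2) \<Longrightarrow> c' \<in> carrier (xgrp C 2) \<Longrightarrow>
   xact C 2 (xbd C 2 c) c' = c \<otimes>\<^bsub>xgrp C 2\<^esub> c' \<otimes>\<^bsub>xgrp C 2\<^esub> inv\<^bsub>xgrp C 2\<^esub> c"
  by (simp add: rxc_def)
lemma rxc_equi: "rxc n C \<Longrightarrow> 3 \<le> k \<Longrightarrow> k \<le> n \<Longrightarrow> x \<in> carrier (xgrp C 1) \<Longrightarrow>
   c \<in> carrier (xgrp C k) \<Longrightarrow> xbd C k (xact C k x c) = xact C (k-1) x (xbd C k c)"
  by (simp add: rxc_def)
lemma rxc_dd: "rxc n C \<Longrightarrow> 3 \<le> k \<Longrightarrow> k \<le> n \<Longrightarrow> c \<in> carrier (xgrp C k) \<Longrightarrow>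
   xbd C (k-1) (xbd C k c) = \<one>\<^bsub>xgrp C (k-2)\<^esub>"
  by (simp add: rxc_def)
lemma rxc_triv: "rxc n C \<Longrightarrow> 3 \<le> k \<Longrightarrow> k \<le> n \<Longrightarrow> c \<in> carrier (xgrp C 2) \<Longrightarrow>
   m \<in> carrier (xgrp C k) \<Longrightarrow> xact C k (xbd C 2 c) m = m"
  by (simp add: rxc_def)

lemma xmor_hom: "xmor n C D f \<Longrightarrow> 1 \<le> k \<Longrightarrow> k \<le> n \<Longrightarrow> f k \<in> hom (xgrp C k) (xgrp D k)"
  by (simp add: xmor_def)
lemma xmor_bd: "xmor n C D f \<Longrightarrow> 2 \<le> k \<Longrightarrow> k \<le> n \<Longrightarrow> c \<in> carrier (xgrp C k) \<Longrightarrow>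
   f (k-1) (xbd C k c) = xbd D k (f k c)"
  by (simp add: xmor_def)
lemma xmor_act: "xmor n C D f \<Longrightarrow> 2 \<le> k \<Longrightarrow> k \<le> n \<Longrightarrow> x \<in> carrier (xgrp C 1) \<Longrightarrow>
   c \<in> carrier (xgrp C k) \<Longrightarrow> f k (xact C k x c) = xact D k (f 1 x) (f k c)"
  by (simp add: xmor_def)

lemma rxc_bd_gh: "rxc n C \<Longrightarrow> 2 \<le> k \<Longrightarrow> k \<le> n \<Longrightarrow> group_hom (xgrp C k) (xgrp C (k-1)) (xbd C k)"
  using rxc_grp[of n C k] rxc_grp[of n C "k-1"] rxc_bd[of n C k]
  unfolding group_hom_def group_hom_axioms_def by auto
lemma rxc_act_gh: "rxc n C \<Longrightarrow> 2 \<le> k \<Longrightarrow> k \<le> n \<Longrightarrow> x \<in> carrier (xgrp C 1) \<Longrightarrow>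
   group_hom (xgrp C k) (xgrp C k) (xact C k x)"
  by (simp add: group_hom_def group_hom_axioms_def rxc_grp rxc_act_hom)

definition Sg :: "'a xcx \<Rightarrow> nat \<Rightarrow> 'a monoid" where
  "Sg C k = (if k = 1 then xgrp C 1 else (xgrp C k)\<lparr>carrier := kernel (xgrp C k) (xgrp C (k-1)) (xbd C k)\<rparr>)"
definition Bd :: "'a xcx \<Rightarrow> nat \<Rightarrow> 'a set" where
  "Bd C k = xbd C (k+1) ` carrier (xgrp C (k+1))"

lemma Bd1: "Bd C 1 = xbd C 2 ` carrier (xgrp C 2)"
  unfolding Bd_def by (simp add: numeral_2_eq_2)

lemma pi_low_eq: "pi_low n C k = Sg C k Mod Bd C k"
  by (simp add: pi_low_def Sg_def Bd_def)

lemma pi_low_map_eq: "pi_low_map D f k = (\<lambda>A. Bd D k #>\<^bsub>Sg D k\<^esub> f k (SOME a. a \<in> A))"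
  by (simp add: pi_low_map_def Sg_def Bd_def r_coset_def fun_eq_iff)

lemma Sg_mult: "x \<otimes>\<^bsub>Sg C k\<^esub> y = x \<otimes>\<^bsub>xgrp C k\<^esub> y"
  by (simp add: Sg_def)

lemma rxc_Sg:
  assumes C: "rxc n C" and k: "1 \<le> k" "k < n"
  shows "group (Sg C k) \<and> Bd C k \<lhd> Sg C k"
proof (cases "k = 1")
  case True
  interpret G1: group "xgrp C 1" using C k by (simp add: rxc_grp)
  interpret d: group_hom "xgrp C 2" "xgrp C 1" "xbd C 2" using rxc_bd_gh[OF C, of 2] k by simp
  have "Bd C 1 \<lhd> xgrp C 1"
  proof (subst G1.normal_inv_iff, intro conjI ballI)
    show "subgroup (Bd C 1) (xgrp C 1)" unfolding Bd1 using d.img_is_subgroup by simp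
  next
    fix x h assume x: "x \<in> carrier (xgrp C 1)" and h: "h \<in> Bd C 1"
    then obtain c where c: "c \<in> carrier (xgrp C 2)" "h = xbd C 2 c" unfolding Bd1 by auto
    have "x \<otimes>\<^bsub>xgrp C 1\<^esub> h \<otimes>\<^bsub>xgrp C 1\<^esub> inv\<^bsub>xgrp C 1\<^esub> x = xbd C 2 (xact C 2 x c)"
      using rxc_cm1[OF C x c(1)] c by simp
    moreover have "xact C 2 x c \<in> carrier (xgrp C 2)"
      using rxc_act_hom[OF C _ _ x, of 2] k c by (auto simp: hom_def)
    ultimately show "x \<otimes>\<^bsub>xgrp C 1\<^esub> h \<otimes>\<^bsub>xgrp C 1\<^esub> inv\<^bsub>xgrp C 1\<^esub> x \<in> Bd C 1"
      unfolding Bd1 by auto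
  qed
  then show ?thesis using True G1.is_group by (simp add: Sg_def)
next
  case False
  then have k2: "2 \<le> k" using k by simp
  interpret Gk: group "xgrp C k" using C k by (simp add: rxc_grp)
  interpret d: group_hom "xgrp C k" "xgrp C (k-1)" "xbd C k" using rxc_bd_gh[OF C k2] k by simp
  interpret e: group_hom "xgrp C (k+1)" "xgrp C k" "xbd C (k+1)"
    using rxc_bd_gh[OF C, of "k+1"] k k2 by simp
  let ?K = "kernel (xgrp C k) (xgrp C (k-1)) (xbd C k)"
  have sK: "subgroup ?K (xgrp C k)" by (rule d.subgroup_kernel)
  have gS: "group (Sg C k)" using False sK Gk.subgroup_imp_group by (simp add: Sg_def)
  have sB: "subgroup (Bd C k) (xgrp C k)" unfolding Bd_def using e.img_is_subgroup by simp
  have BK: "Bd C k \<subseteq> ?K"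
  proof
    fix h assume "h \<in> Bd C k"
    then obtain c where c: "c \<in> carrier (xgrp C (k+1))" "h = xbd C (k+1) c" unfolding Bd_def by auto
    have "xbd C k h = \<one>\<^bsub>xgrp C (k-1)\<^esub>"
      using rxc_dd[OF C, of "k+1" c] c k k2 by simp
    then show "h \<in> ?K" using c e.hom_closed by (simp add: kernel_def)
  qed
  have sBS: "subgroup (Bd C k) (Sg C k)"
    using Gk.subgroup_incl[OF sB sK BK] False by (simp add: Sg_def)
  have comm: "comm_group (Sg C k)"
  proof (rule group.group_comm_groupI[OF gS])
    fix x y assume x: "x \<in> carrier (Sg C k)" and y: "y \<in> carrier (Sg C k)"
    show "x \<otimes>\<^bsub>Sg C k\<^esub> y = y \<otimes>\<^bsub>Sg C k\<^esub> x"
    proof (cases "k = 2")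
      case True
      have xc: "x \<in> carrier (xgrp C 2)" and dx: "xbd C 2 x = \<one>\<^bsub>xgrp C 1\<^esub>"
        using x True False by (auto simp: Sg_def kernel_def)
      have yc: "y \<in> carrier (xgrp C 2)" using y True False by (auto simp: Sg_def kernel_def)
      have "xact C 2 (xbd C 2 x) y = y" using dx rxc_act_one[OF C _ _ yc] k True by simp
      then have "x \<otimes>\<^bsub>xgrp C 2\<^esub> y \<otimes>\<^bsub>xgrp C 2\<^esub> inv\<^bsub>xgrp C 2\<^esub> x = y"
        using rxc_cm2[OF C xc yc] by simp
      then have "x \<otimes>\<^bsub>xgrp C 2\<^esub> y = y \<otimes>\<^bsub>xgrp C 2\<^esub> x"
        using xc yc True by (metis Gk.inv_closed Gk.inv_solve_right Gk.m_closed)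
      then show ?thesis using True by (simp add: Sg_def)
    next
      case F2: False
      interpret cg: comm_group "xgrp C k" using rxc_comm[OF C, of k] k k2 F2 by simp
      have "x \<in> carrier (xgrp C k)" "y \<in> carrier (xgrp C k)"
        using x y False by (auto simp: Sg_def kernel_def)
      then show ?thesis by (simp add: Sg_mult cg.m_comm)
    qed
  qed
  show ?thesis using gS comm_group.subgroup_imp_normal[OF comm sBS] by simp
qed



lemma r_coset_Sg: "H #>\<^bsub>Sg C k\<^esub> a = H #>\<^bsub>xgrp C k\<^esub> a"
  by (simp add: r_coset_def Sg_def)

lemma carrier_Sg: "carrier (Sg C k) = (if k = 1 then carrier (xgrp C 1) else kernel (xgrp C k) (xgrp C (k-1)) (xbd C k))"
  by (simp add: Sg_def)

lemma mor_Sg: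
  assumes D: "rxc n D" and f: "xmor n C D f" and gC: "\<forall>k\<in>{1..n}. group (xgrp C k)"
    and k: "1 \<le> k" "k < n"
  shows "f k \<in> hom (Sg C k) (Sg D k) \<and> f k ` Bd C k \<subseteq> Bd D k"
proof
  show "f k \<in> hom (Sg C k) (Sg D k)"
  proof (rule homI)
    fix x assume x: "x \<in> carrier (Sg C k)"
    show "f k x \<in> carrier (Sg D k)"
    proof (cases "k = 1")
      case True then show ?thesis using x xmor_hom[OF f, of 1] k by (auto simp: carrier_Sg hom_def)
    next
      case False
      have xc: "x \<in> carrier (xgrp C k)" and dx: "xbd C k x = \<one>\<^bsub>xgrp C (k-1)\<^esub>"
        using x False by (auto simp: carrier_Sg kernel_def)
      have fx: "f k x \<in> carrier (xgrp D k)" using xmor_hom[OF f, of k] k xc by (auto simp: hom_def)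
      have "k-1 \<in> {1..n}" using k False by auto
      then have gc1: "group (xgrp C (k-1))" using gC by blast
      interpret gh: group_hom "xgrp C (k-1)" "xgrp D (k-1)" "f (k-1)"
        using gc1 rxc_grp[OF D, of "k-1"] xmor_hom[OF f, of "k-1"] k False
        unfolding group_hom_def group_hom_axioms_def by auto
      have "xbd D k (f k x) = f (k-1) (xbd C k x)" using xmor_bd[OF f, of k x] k False xc by simp
      also have "\<dots> = \<one>\<^bsub>xgrp D (k-1)\<^esub>" using dx gh.hom_one by simp
      finally show ?thesis using fx False by (simp add: carrier_Sg kernel_def)
    qed
  next
    fix x y assume x: "x \<in> carrier (Sg C k)" and y: "y \<in> carrier (Sg C k)"
    have "x \<in> carrier (xgrp C k)" "y \<in> carrier (xgrp C k)" using x y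
      by (auto simp: carrier_Sg kernel_def split: if_splits)
    then show "f k (x \<otimes>\<^bsub>Sg C k\<^esub> y) = f k x \<otimes>\<^bsub>Sg D k\<^esub> f k y"
      using xmor_hom[OF f, of k] k by (simp add: Sg_mult hom_def)
  qed
next
  show "f k ` Bd C k \<subseteq> Bd D k"
  proof
    fix z assume "z \<in> f k ` Bd C k"
    then obtain c where c: "c \<in> carrier (xgrp C (k+1))" "z = f k (xbd C (k+1) c)"
      unfolding Bd_def by auto
    have "z = xbd D (k+1) (f (k+1) c)" using xmor_bd[OF f, of "k+1" c] c k by simp
    moreover have "f (k+1) c \<in> carrier (xgrp D (k+1))" using xmor_hom[OF f, of "k+1"] c k
      by (auto simp: hom_def)
    ultimately show "z \<in> Bd D k" unfolding Bd_def by auto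
  qed
qed

lemma weq_low_iff:
  assumes D: "rxc n D" and f: "xmor n C D f" and gC: "\<forall>k\<in>{1..n}. group (xgrp C k)"
    and k: "1 \<le> k" "k < n" and gS: "group (Sg C k)" and nS: "Bd C k \<lhd> Sg C k"
  shows "pi_low_map D f k \<in> iso (pi_low n C k) (pi_low n D k) \<longleftrightarrow>
    ((\<forall>y\<in>carrier (Sg D k). \<exists>x\<in>carrier (Sg C k). Bd D k #>\<^bsub>xgrp D k\<^esub> f k x = Bd D k #>\<^bsub>xgrp D k\<^esub> y) \<and>
     (\<forall>x\<in>carrier (Sg C k). f k x \<in> Bd D k \<longrightarrow> x \<in> Bd C k))"
  using quot_iso[OF gS conjunct1[OF rxc_Sg[OF D k]] nS conjunct2[OF rxc_Sg[OF D k]]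
      conjunct1[OF mor_Sg[OF D f gC k]] conjunct2[OF mor_Sg[OF D f gC k]]]
  by (simp add: pi_low_eq pi_low_map_eq r_coset_Sg)



lemma xgrp_xprod [simp]: "xgrp (xprod H G) k = xgrp H k \<times>\<times> xgrp G k"
  by (simp add: xprod_def)
lemma xbd_xprod [simp]: "xbd (xprod H G) k (x, y) = (xbd H k x, xbd G k y)"
  by (simp add: xprod_def)
lemma xact_xprod [simp]: "xact (xprod H G) k (u, v) (x, y) = (xact H k u x, xact G k v y)"
  by (simp add: xprod_def)

lemma hom_pairI:
  assumes "f \<in> hom A C" "g \<in> hom B D"
  shows "(\<lambda>(x, y). (f x, g y)) \<in> hom (A \<times>\<times> B) (C \<times>\<times> D)"
  using assms by (auto simp: hom_def)

lemma rxc_xprod: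
  assumes H: "rxc n H" and G: "rxc n G" and n: "2 \<le> n"
  shows "rxc n (xprod H G)"
  unfolding rxc_def
proof (intro conjI ballI)
  fix k assume k: "k \<in> {1..n}"
  show "group (xgrp (xprod H G) k)" using k rxc_grp[OF H] rxc_grp[OF G] by (auto intro: DirProd_group)
next
  fix k assume k: "k \<in> {3..n}"
  interpret h: comm_group "xgrp H k" using k rxc_comm[OF H] by auto
  interpret g: comm_group "xgrp G k" using k rxc_comm[OF G] by auto
  have "group (xgrp (xprod H G) k)" by (simp add: DirProd_group h.is_group g.is_group)
  then show "comm_group (xgrp (xprod H G) k)"
    by (rule group.group_comm_groupI) (auto simp: h.m_comm g.m_comm)
next
  fix k assume k: "k \<in> {2..n}"
  have "(\<lambda>(x, y). (xbd H k x, xbd G k y)) \<in> hom (xgrp H k \<times>\<times> xgrp G k) (xgrp H (k-1) \<times>\<times> xgrp G (k-1))"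
    using k rxc_bd[OF H] rxc_bd[OF G] by (auto intro!: hom_pairI)
  moreover have "xbd (xprod H G) k = (\<lambda>(x, y). (xbd H k x, xbd G k y))"
    by (simp add: xprod_def)
  ultimately show "xbd (xprod H G) k \<in> hom (xgrp (xprod H G) k) (xgrp (xprod H G) (k - 1))" by simp
next
  fix k x assume k: "k \<in> {2..n}" and x: "x \<in> carrier (xgrp (xprod H G) 1)"
  obtain u v where uv: "x = (u, v)" "u \<in> carrier (xgrp H 1)" "v \<in> carrier (xgrp G 1)"
    using x by auto
  have "(\<lambda>(a, b). (xact H k u a, xact G k v b)) \<in> hom (xgrp H k \<times>\<times> xgrp G k) (xgrp H k \<times>\<times> xgrp G k)"
    using k uv rxc_act_hom[OF H] rxc_act_hom[OF G] by (auto intro!: hom_pairI)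
  moreover have "xact (xprod H G) k x = (\<lambda>(a, b). (xact H k u a, xact G k v b))"
    using uv by (simp add: xprod_def)
  ultimately show "xact (xprod H G) k x \<in> hom (xgrp (xprod H G) k) (xgrp (xprod H G) k)" by simp
next
  fix k c assume k: "k \<in> {2..n}" and c: "c \<in> carrier (xgrp (xprod H G) k)"
  then show "xact (xprod H G) k \<one>\<^bsub>xgrp (xprod H G) 1\<^esub> c = c"
    using rxc_act_one[OF H] rxc_act_one[OF G] by (cases c) auto
next
  fix k x y c assume k: "k \<in> {2..n}" and x: "x \<in> carrier (xgrp (xprod H G) 1)"
    and y: "y \<in> carrier (xgrp (xprod H G) 1)" and c: "c \<in> carrier (xgrp (xprod H G) k)"
  then show "xact (xprod H G) k (x \<otimes>\<^bsub>xgrp (xprod H G) 1\<^esub> y) c =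
       xact (xprod H G) k x (xact (xprod H G) k y c)"
    using rxc_act_comp[OF H] rxc_act_comp[OF G] by (cases x, cases y, cases c) auto
next
  fix x c assume x: "x \<in> carrier (xgrp (xprod H G) 1)" and c: "c \<in> carrier (xgrp (xprod H G) 2)"
  have gh: "group (xgrp H 1)" "group (xgrp G 1)" using rxc_grp[OF H, of 1] rxc_grp[OF G, of 1] n by auto
  obtain u v where uv: "x = (u, v)" "u \<in> carrier (xgrp H 1)" "v \<in> carrier (xgrp G 1)" using x by auto
  obtain a b where ab: "c = (a, b)" "a \<in> carrier (xgrp H 2)" "b \<in> carrier (xgrp G 2)" using c by auto
  show "xbd (xprod H G) 2 (xact (xprod H G) 2 x c) =
       x \<otimes>\<^bsub>xgrp (xprod H G) 1\<^esub> xbd (xprod H G) 2 c \<otimes>\<^bsub>xgrp (xprod H G) 1\<^esub> inv\<^bsub>xgrp (xprod H G) 1\<^esub> x"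
  proof -
    have iv: "inv\<^bsub>xgrp (xprod H G) 1\<^esub> x = (inv\<^bsub>xgrp H 1\<^esub> u, inv\<^bsub>xgrp G 1\<^esub> v)"
      by (simp only: xgrp_xprod uv(1) inv_DirProd[OF gh uv(2) uv(3)])
    show ?thesis using uv ab rxc_cm1[OF H] rxc_cm1[OF G] iv by simp
  qed
next
  fix c c' assume c: "c \<in> carrier (xgrp (xprod H G) 2)" and c': "c' \<in> carrier (xgrp (xprod H G) 2)"
  have gh: "group (xgrp H 2)" "group (xgrp G 2)" using rxc_grp[OF H, of 2] rxc_grp[OF G, of 2] n by auto
  obtain a b where ab: "c = (a, b)" "a \<in> carrier (xgrp H 2)" "b \<in> carrier (xgrp G 2)" using c by auto
  obtain a' b' where ab': "c' = (a', b')" "a' \<in> carrier (xgrp H 2)" "b' \<in> carrier (xgrp G 2)" using c' by auto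
  show "xact (xprod H G) 2 (xbd (xprod H G) 2 c) c' =
       c \<otimes>\<^bsub>xgrp (xprod H G) 2\<^esub> c' \<otimes>\<^bsub>xgrp (xprod H G) 2\<^esub> inv\<^bsub>xgrp (xprod H G) 2\<^esub> c"
  proof -
    have iv: "inv\<^bsub>xgrp (xprod H G) 2\<^esub> c = (inv\<^bsub>xgrp H 2\<^esub> a, inv\<^bsub>xgrp G 2\<^esub> b)"
      by (simp only: xgrp_xprod ab(1) inv_DirProd[OF gh ab(2) ab(3)])
    show ?thesis using ab ab' rxc_cm2[OF H] rxc_cm2[OF G] iv by simp
  qed
next
  fix k x c assume k: "k \<in> {3..n}" and x: "x \<in> carrier (xgrp (xprod H G) 1)"
    and c: "c \<in> carrier (xgrp (xprod H G) k)"
  then show "xbd (xprod H G) k (xact (xprod H G) k x c) = xact (xprod H G) (k - 1) x (xbd (xprod H G) k c)"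
    using rxc_equi[OF H] rxc_equi[OF G] by (cases x, cases c) auto
next
  fix k c assume k: "k \<in> {3..n}" and c: "c \<in> carrier (xgrp (xprod H G) k)"
  then show "xbd (xprod H G) (k - 1) (xbd (xprod H G) k c) = \<one>\<^bsub>xgrp (xprod H G) (k - 2)\<^esub>"
    using rxc_dd[OF H] rxc_dd[OF G] by (cases c) auto
next
  fix k c m assume k: "k \<in> {3..n}" and c: "c \<in> carrier (xgrp (xprod H G) 2)"
    and m: "m \<in> carrier (xgrp (xprod H G) k)"
  then show "xact (xprod H G) k (xbd (xprod H G) 2 c) m = m"
    using rxc_triv[OF H] rxc_triv[OF G] by (cases c, cases m) auto
qed

lemma xmor_npair:
  assumes p: "xmor n Q H p" and f: "xmor n Q G f"
  shows "xmor n Q (xprod H G) (npair p f)"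
  unfolding xmor_def
proof (intro conjI ballI)
  fix k assume "k \<in> {1..n}"
  then show "npair p f k \<in> hom (xgrp Q k) (xgrp (xprod H G) k)"
    using xmor_hom[OF p, of k] xmor_hom[OF f, of k] by (auto simp: hom_def npair_def)
next
  fix k c assume "k \<in> {2..n}" "c \<in> carrier (xgrp Q k)"
  then show "npair p f (k - 1) (xbd Q k c) = xbd (xprod H G) k (npair p f k c)"
    using xmor_bd[OF p] xmor_bd[OF f] by (simp add: npair_def)
next
  fix k x c assume "k \<in> {2..n}" "x \<in> carrier (xgrp Q 1)" "c \<in> carrier (xgrp Q k)"
  then show "npair p f k (xact Q k x c) = xact (xprod H G) k (npair p f 1 x) (npair p f k c)"
    using xmor_act[OF p] xmor_act[OF f] by (simp add: npair_def)
qed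




locale PO =
  fixes n :: nat and Q :: "'q xcx" and K :: "'k xcx" and nab :: "nat \<Rightarrow> 'q \<Rightarrow> 'k"
  assumes n3: "3 \<le> n" and Q: "rxc n Q" and K: "rxc n K" and nab: "xmor n Q K nab"
begin

abbreviation "Qm \<equiv> xgrp Q (n - Suc 0)"
abbreviation "Kn \<equiv> xgrp K n"
abbreviation "SD \<equiv> po_sd n Q K nab"
abbreviation "NN \<equiv> po_N n Q K nab"

definition alpha :: "'q \<Rightarrow> 'k \<Rightarrow> 'k" where
  "alpha a m = (if n = 3 then xact K n (nab (Suc 0) (xbd Q (n - Suc 0) (inv\<^bsub>Qm\<^esub> a))) m else m)"

lemma SD_mult: "(a, m) \<otimes>\<^bsub>SD\<^esub> (a', m') = (a \<otimes>\<^bsub>Qm\<^esub> a', alpha a' m \<otimes>\<^bsub>Kn\<^esub> m')"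
  by (simp add: po_sd_def alpha_def)
lemma SD_carrier: "carrier SD = carrier Qm \<times> carrier Kn"
  by (simp add: po_sd_def)
lemma SD_one: "\<one>\<^bsub>SD\<^esub> = (\<one>\<^bsub>Qm\<^esub>, \<one>\<^bsub>Kn\<^esub>)"
  by (simp add: po_sd_def)

lemma gQm: "group Qm" using rxc_grp[OF Q, of "n - Suc 0"] n3 by simp
lemma gQn: "group (xgrp Q n)" using rxc_grp[OF Q, of n] n3 by simp
lemma gKn: "group Kn" using rxc_grp[OF K, of n] n3 by simp
lemma cKn: "comm_group Kn" using rxc_comm[OF K, of n] n3 by simp

lemma alpha_props:
  assumes a: "a \<in> carrier Qm"
  shows "alpha a \<in> hom Kn Kn"
    and "\<And>a'. a' \<in> carrier Qm \<Longrightarrow> m \<in> carrier Kn \<Longrightarrow> alpha (a \<otimes>\<^bsub>Qm\<^esub> a') m = alpha a' (alpha a m)"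
proof -
  interpret Qm: group Qm by (rule gQm)
  show "alpha a \<in> hom Kn Kn"
  proof (cases "n = 3")
    case True
    interpret Q2: group "xgrp Q 2" using rxc_grp[OF Q, of 2] True by simp
    have "inv\<^bsub>xgrp Q 2\<^esub> a \<in> carrier (xgrp Q 2)" using a True by simp
    then have "xbd Q 2 (inv\<^bsub>xgrp Q 2\<^esub> a) \<in> carrier (xgrp Q (Suc 0))"
      using rxc_bd[OF Q, of 2] True by (auto simp: hom_def)
    then have "nab (Suc 0) (xbd Q 2 (inv\<^bsub>xgrp Q 2\<^esub> a)) \<in> carrier (xgrp K (Suc 0))"
      using xmor_hom[OF nab, of "Suc 0"] True by (auto simp: hom_def)
    then show ?thesis using rxc_act_hom[OF K, of 3] True unfolding alpha_def by (simp add: fun_eq_iff)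
  next
    case False
    then show ?thesis unfolding alpha_def by (simp add: hom_def)
  qed
  fix a' assume a': "a' \<in> carrier Qm" and m: "m \<in> carrier Kn"
  show "alpha (a \<otimes>\<^bsub>Qm\<^esub> a') m = alpha a' (alpha a m)"
  proof (cases "n = 3")
    case True
    interpret d: group_hom "xgrp Q 2" "xgrp Q (Suc 0)" "xbd Q 2" using rxc_bd_gh[OF Q, of 2] True by simp
    interpret h: group_hom "xgrp Q (Suc 0)" "xgrp K (Suc 0)" "nab (Suc 0)"
      using rxc_grp[OF Q, of "Suc 0"] rxc_grp[OF K, of "Suc 0"] xmor_hom[OF nab, of "Suc 0"] True
      unfolding group_hom_def group_hom_axioms_def by simp
    have a2: "a \<in> carrier (xgrp Q 2)" "a' \<in> carrier (xgrp Q 2)" using a a' True by auto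
    have "inv\<^bsub>xgrp Q 2\<^esub> (a \<otimes>\<^bsub>xgrp Q 2\<^esub> a') = inv\<^bsub>xgrp Q 2\<^esub> a' \<otimes>\<^bsub>xgrp Q 2\<^esub> inv\<^bsub>xgrp Q 2\<^esub> a"
      using a2 by (simp add: d.G.inv_mult_group)
    then have "nab (Suc 0) (xbd Q 2 (inv\<^bsub>xgrp Q 2\<^esub> (a \<otimes>\<^bsub>xgrp Q 2\<^esub> a'))) =
       nab (Suc 0) (xbd Q 2 (inv\<^bsub>xgrp Q 2\<^esub> a')) \<otimes>\<^bsub>xgrp K (Suc 0)\<^esub> nab (Suc 0) (xbd Q 2 (inv\<^bsub>xgrp Q 2\<^esub> a))"
      using a2 by simp
    then show ?thesis unfolding alpha_def using True a2 m rxc_act_comp[OF K, of 3] by simp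
  next
    case False then show ?thesis by (simp add: alpha_def)
  qed
qed

lemma alpha_one: "m \<in> carrier Kn \<Longrightarrow> alpha \<one>\<^bsub>Qm\<^esub> m = m"
proof (cases "n = 3")
  case True
  assume m: "m \<in> carrier Kn"
  interpret d: group_hom "xgrp Q 2" "xgrp Q (Suc 0)" "xbd Q 2" using rxc_bd_gh[OF Q, of 2] True by simp
  interpret h: group_hom "xgrp Q (Suc 0)" "xgrp K (Suc 0)" "nab (Suc 0)"
    using rxc_grp[OF Q, of "Suc 0"] rxc_grp[OF K, of "Suc 0"] xmor_hom[OF nab, of "Suc 0"] True
    unfolding group_hom_def group_hom_axioms_def by simp
  show ?thesis unfolding alpha_def using True m rxc_act_one[OF K, of 3] by simp
next
  case False then show "m \<in> carrier Kn \<Longrightarrow> ?thesis" by (simp add: alpha_def)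
qed

lemma alpha_closed: "a \<in> carrier Qm \<Longrightarrow> m \<in> carrier Kn \<Longrightarrow> alpha a m \<in> carrier Kn"
  using alpha_props(1) by (auto simp: hom_def)
lemma alpha_mult: "a \<in> carrier Qm \<Longrightarrow> m \<in> carrier Kn \<Longrightarrow> m' \<in> carrier Kn \<Longrightarrow>
   alpha a (m \<otimes>\<^bsub>Kn\<^esub> m') = alpha a m \<otimes>\<^bsub>Kn\<^esub> alpha a m'"
  using alpha_props(1) by (auto simp: hom_def)
lemma alpha_oneK: "a \<in> carrier Qm \<Longrightarrow> alpha a \<one>\<^bsub>Kn\<^esub> = \<one>\<^bsub>Kn\<^esub>"
  using alpha_props(1) gKn by (simp add: group_hom.hom_one group_hom_def group_hom_axioms_def)

lemma group_SD: "group SD"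
proof -
  interpret Qm: group Qm by (rule gQm)
  interpret Kn: group Kn by (rule gKn)
  show ?thesis
  proof (rule groupI)
    fix x y assume "x \<in> carrier SD" "y \<in> carrier SD"
    then show "x \<otimes>\<^bsub>SD\<^esub> y \<in> carrier SD"
      by (cases x, cases y) (auto simp: SD_mult SD_carrier alpha_closed)
  next
    show "\<one>\<^bsub>SD\<^esub> \<in> carrier SD" by (simp add: SD_one SD_carrier)
  next
    fix x y z assume "x \<in> carrier SD" "y \<in> carrier SD" "z \<in> carrier SD"
    then show "x \<otimes>\<^bsub>SD\<^esub> y \<otimes>\<^bsub>SD\<^esub> z = x \<otimes>\<^bsub>SD\<^esub> (y \<otimes>\<^bsub>SD\<^esub> z)"
      by (cases x, cases y, cases z)
         (auto simp: SD_mult SD_carrier alpha_closed alpha_mult alpha_props(2) Qm.m_assoc Kn.m_assoc)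
  next
    fix x assume "x \<in> carrier SD"
    then show "\<one>\<^bsub>SD\<^esub> \<otimes>\<^bsub>SD\<^esub> x = x"
      by (cases x) (auto simp: SD_mult SD_carrier SD_one alpha_oneK)
  next
    fix x assume x: "x \<in> carrier SD"
    then obtain a m where am: "x = (a, m)" "a \<in> carrier Qm" "m \<in> carrier Kn" by (auto simp: SD_carrier)
    let ?y = "(inv\<^bsub>Qm\<^esub> a, alpha (inv\<^bsub>Qm\<^esub> a) (inv\<^bsub>Kn\<^esub> m))"
    have "alpha a (alpha (inv\<^bsub>Qm\<^esub> a) (inv\<^bsub>Kn\<^esub> m)) = inv\<^bsub>Kn\<^esub> m"
      using alpha_props(2)[of "inv\<^bsub>Qm\<^esub> a" a "inv\<^bsub>Kn\<^esub> m"] am alpha_one by simp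
    then have "?y \<otimes>\<^bsub>SD\<^esub> x = \<one>\<^bsub>SD\<^esub>" using am by (simp add: SD_mult SD_one)
    moreover have "?y \<in> carrier SD" using am by (simp add: SD_carrier alpha_closed)
    ultimately show "\<exists>y\<in>carrier SD. y \<otimes>\<^bsub>SD\<^esub> x = \<one>\<^bsub>SD\<^esub>" by blast
  qed
qed

end


context PO begin

definition gN :: "'q \<Rightarrow> 'q \<times> 'k" where
  "gN x = (inv\<^bsub>Qm\<^esub> (xbd Q n x), nab n x)"

lemma NN_eq: "NN = gN ` carrier (xgrp Q n)"
  by (simp add: po_N_def gN_def)

lemma bdn_closed: "x \<in> carrier (xgrp Q n) \<Longrightarrow> xbd Q n x \<in> carrier Qm"
  using rxc_bd[OF Q, of n] n3 by (auto simp: hom_def)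

lemma nabn_closed: "x \<in> carrier (xgrp Q n) \<Longrightarrow> nab n x \<in> carrier Kn"
  using xmor_hom[OF nab, of n] n3 by (auto simp: hom_def)

lemma bdn_central:
  assumes x: "x \<in> carrier (xgrp Q n)" and a: "a \<in> carrier Qm"
  shows "xbd Q n x \<otimes>\<^bsub>Qm\<^esub> a = a \<otimes>\<^bsub>Qm\<^esub> xbd Q n x"
proof (cases "n = 3")
  case True
  interpret Q2: group "xgrp Q 2" using rxc_grp[OF Q, of 2] True by simp
  have a2: "a \<in> carrier (xgrp Q 2)" using a True by simp
  have c: "xbd Q 3 x \<in> carrier (xgrp Q 2)" using bdn_closed[OF x] True by simp
  have "xbd Q 2 (xbd Q 3 x) = \<one>\<^bsub>xgrp Q (Suc 0)\<^esub>" using rxc_dd[OF Q, of 3 x] x True by simp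
  then have "xact Q 2 (xbd Q 2 (xbd Q 3 x)) a = a" using rxc_act_one[OF Q, of 2 a] a2 True by simp
  then have "xbd Q 3 x \<otimes>\<^bsub>xgrp Q 2\<^esub> a \<otimes>\<^bsub>xgrp Q 2\<^esub> inv\<^bsub>xgrp Q 2\<^esub> xbd Q 3 x = a"
    using rxc_cm2[OF Q c a2] by simp
  then have "xbd Q 3 x \<otimes>\<^bsub>xgrp Q 2\<^esub> a = a \<otimes>\<^bsub>xgrp Q 2\<^esub> xbd Q 3 x"
    using a2 c by (metis Q2.inv_solve_right Q2.m_closed Q2.inv_closed)
  then show ?thesis using True by simp
next
  case False
  interpret cg: comm_group Qm using rxc_comm[OF Q, of "n - Suc 0"] n3 False by simp
  show ?thesis using bdn_closed[OF x] a cg.m_comm by simp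
qed

lemma alpha_triv:
  assumes x: "x \<in> carrier (xgrp Q n)" and m: "m \<in> carrier Kn"
  shows "alpha (inv\<^bsub>Qm\<^esub> (xbd Q n x)) m = m"
proof (cases "n = 3")
  case True
  interpret Q2: group "xgrp Q 2" using rxc_grp[OF Q, of 2] True by simp
  interpret h: group_hom "xgrp Q (Suc 0)" "xgrp K (Suc 0)" "nab (Suc 0)"
    using rxc_grp[OF Q, of "Suc 0"] rxc_grp[OF K, of "Suc 0"] xmor_hom[OF nab, of "Suc 0"] True
    unfolding group_hom_def group_hom_axioms_def by simp
  have c: "xbd Q 3 x \<in> carrier (xgrp Q 2)" using bdn_closed[OF x] True by simp
  have "xbd Q 2 (xbd Q 3 x) = \<one>\<^bsub>xgrp Q (Suc 0)\<^esub>" using rxc_dd[OF Q, of 3 x] x True by simp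
  then show ?thesis unfolding alpha_def using True c m rxc_act_one[OF K, of 3 m] by simp
next
  case False then show ?thesis by (simp add: alpha_def)
qed

lemma gN_hom: "gN \<in> hom (xgrp Q n) SD"
proof (rule homI)
  fix x assume x: "x \<in> carrier (xgrp Q n)"
  interpret Qm: group Qm by (rule gQm)
  show "gN x \<in> carrier SD" using x bdn_closed nabn_closed by (simp add: gN_def SD_carrier)
next
  fix x y assume x: "x \<in> carrier (xgrp Q n)" and y: "y \<in> carrier (xgrp Q n)"
  interpret Qm: group Qm by (rule gQm)
  interpret d: group_hom "xgrp Q n" Qm "xbd Q n" using rxc_bd_gh[OF Q, of n] n3 by simp
  interpret h: group_hom "xgrp Q n" Kn "nab n"
    using gQn gKn xmor_hom[OF nab, of n] n3 unfolding group_hom_def group_hom_axioms_def by simp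
  have "inv\<^bsub>Qm\<^esub> (xbd Q n (x \<otimes>\<^bsub>xgrp Q n\<^esub> y)) =
      inv\<^bsub>Qm\<^esub> (xbd Q n x) \<otimes>\<^bsub>Qm\<^esub> inv\<^bsub>Qm\<^esub> (xbd Q n y)"
  proof -
    have "inv\<^bsub>Qm\<^esub> (xbd Q n (x \<otimes>\<^bsub>xgrp Q n\<^esub> y)) = inv\<^bsub>Qm\<^esub> (xbd Q n x \<otimes>\<^bsub>Qm\<^esub> xbd Q n y)"
      using x y by simp
    also have "xbd Q n x \<otimes>\<^bsub>Qm\<^esub> xbd Q n y = xbd Q n y \<otimes>\<^bsub>Qm\<^esub> xbd Q n x"
      using bdn_central[OF x bdn_closed[OF y]] .
    also have "inv\<^bsub>Qm\<^esub> (xbd Q n y \<otimes>\<^bsub>Qm\<^esub> xbd Q n x) = inv\<^bsub>Qm\<^esub> (xbd Q n x) \<otimes>\<^bsub>Qm\<^esub> inv\<^bsub>Qm\<^esub> (xbd Q n y)"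
      using x y bdn_closed by (simp add: Qm.inv_mult_group)
    finally show ?thesis .
  qed
  then show "gN (x \<otimes>\<^bsub>xgrp Q n\<^esub> y) = gN x \<otimes>\<^bsub>SD\<^esub> gN y"
    using x y by (simp add: gN_def SD_mult alpha_triv nabn_closed)
qed

lemma subgroup_NN: "subgroup NN SD"
proof -
  interpret gh: group_hom "xgrp Q n" SD gN
    using gQn group_SD gN_hom unfolding group_hom_def group_hom_axioms_def by simp
  show ?thesis unfolding NN_eq by (rule gh.img_is_subgroup)
qed

lemma normal_NN: "NN \<lhd> SD"
proof (cases "n = 3")
  case False
  interpret Qm: comm_group Qm using rxc_comm[OF Q, of "n - Suc 0"] n3 False by simp
  interpret Kn: comm_group Kn by (rule cKn)
  have "comm_group SD"
  proof (rule group.group_comm_groupI[OF group_SD])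
    fix x y assume "x \<in> carrier SD" "y \<in> carrier SD"
    then show "x \<otimes>\<^bsub>SD\<^esub> y = y \<otimes>\<^bsub>SD\<^esub> x" using False
      by (cases x, cases y) (auto simp: SD_mult SD_carrier alpha_def Qm.m_comm Kn.m_comm)
  qed
  then show ?thesis using comm_group.subgroup_imp_normal subgroup_NN by blast
next
  case True
  interpret SD: group SD by (rule group_SD)
  interpret Q2: group "xgrp Q 2" using rxc_grp[OF Q, of 2] True by simp
  interpret K3: comm_group "xgrp K 3" using cKn True by simp
  interpret d2: group_hom "xgrp Q 2" "xgrp Q (Suc 0)" "xbd Q 2" using rxc_bd_gh[OF Q, of 2] True by simp
  interpret h: group_hom "xgrp Q (Suc 0)" "xgrp K (Suc 0)" "nab (Suc 0)"
    using rxc_grp[OF Q, of "Suc 0"] rxc_grp[OF K, of "Suc 0"] xmor_hom[OF nab, of "Suc 0"] True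
    unfolding group_hom_def group_hom_axioms_def by simp
  show ?thesis
  proof (subst SD.normal_inv_iff, intro conjI ballI)
    show "subgroup NN SD" by (rule subgroup_NN)
  next
    fix u h assume u: "u \<in> carrier SD" and h: "h \<in> NN"
    have "u \<in> carrier Qm \<times> carrier Kn" using u by (simp add: SD_carrier)
    then obtain a m where am: "u = (a, m)" "a \<in> carrier (xgrp Q 2)" "m \<in> carrier (xgrp K 3)"
      using True by auto
    obtain x where xn: "x \<in> carrier (xgrp Q n)" "h = gN x" using h by (auto simp: NN_eq)
    have x: "x \<in> carrier (xgrp Q 3)" using xn True by simp
    have da: "xbd Q 2 a \<in> carrier (xgrp Q (Suc 0))" using am d2.hom_closed by simp
    define x' where "x' = xact Q 3 (xbd Q 2 a) x"
    have x'3: "x' \<in> carrier (xgrp Q 3)" unfolding x'_def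
      using rxc_act_hom[OF Q, of 3 "xbd Q 2 a"] da x True by (auto simp: hom_def)
    have x': "x' \<in> carrier (xgrp Q n)" using x'3 True by simp
    have cx: "xbd Q 3 x \<in> carrier (xgrp Q 2)" using bdn_closed[OF xn(1)] True by simp
    have nx: "nab 3 x \<in> carrier (xgrp K 3)" using nabn_closed xn True by simp
    have "xbd Q 3 x' = xact Q 2 (xbd Q 2 a) (xbd Q 3 x)" unfolding x'_def
      using rxc_equi[OF Q, of 3 "xbd Q 2 a" x] da x True by simp
    also have "\<dots> = a \<otimes>\<^bsub>xgrp Q 2\<^esub> xbd Q 3 x \<otimes>\<^bsub>xgrp Q 2\<^esub> inv\<^bsub>xgrp Q 2\<^esub> a"
      using rxc_cm2[OF Q am(2) cx] .
    finally have bx': "xbd Q 3 x' = a \<otimes>\<^bsub>xgrp Q 2\<^esub> xbd Q 3 x \<otimes>\<^bsub>xgrp Q 2\<^esub> inv\<^bsub>xgrp Q 2\<^esub> a" .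
    have c1: "inv\<^bsub>xgrp Q 2\<^esub> (xbd Q 3 x') \<otimes>\<^bsub>xgrp Q 2\<^esub> a = a \<otimes>\<^bsub>xgrp Q 2\<^esub> inv\<^bsub>xgrp Q 2\<^esub> (xbd Q 3 x)"
      unfolding bx' using am cx by (simp add: Q2.inv_mult_group Q2.m_assoc)
    have ia: "xbd Q 2 (inv\<^bsub>xgrp Q 2\<^esub> a) \<in> carrier (xgrp Q (Suc 0))" using am by simp
    have "nab 3 x' = xact K 3 (nab (Suc 0) (xbd Q 2 a)) (nab 3 x)"
      unfolding x'_def using xmor_act[OF nab, of 3 "xbd Q 2 a" x] da x True by simp
    then have "alpha a (nab n x') = xact K 3 (nab (Suc 0) (xbd Q 2 (inv\<^bsub>xgrp Q 2\<^esub> a)))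
         (xact K 3 (nab (Suc 0) (xbd Q 2 a)) (nab 3 x))" unfolding alpha_def using True by simp
    also have "\<dots> = xact K 3 (nab (Suc 0) (xbd Q 2 (inv\<^bsub>xgrp Q 2\<^esub> a)) \<otimes>\<^bsub>xgrp K (Suc 0)\<^esub>
        nab (Suc 0) (xbd Q 2 a)) (nab 3 x)"
      using rxc_act_comp[OF K, of 3] ia da nx True by simp
    also have "nab (Suc 0) (xbd Q 2 (inv\<^bsub>xgrp Q 2\<^esub> a)) \<otimes>\<^bsub>xgrp K (Suc 0)\<^esub> nab (Suc 0) (xbd Q 2 a)
        = \<one>\<^bsub>xgrp K (Suc 0)\<^esub>"
      using am ia da by (simp flip: h.hom_mult d2.hom_mult)
    also have "xact K 3 \<one>\<^bsub>xgrp K (Suc 0)\<^esub> (nab 3 x) = nab 3 x"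
      using rxc_act_one[OF K, of 3] nx True by simp
    finally have c2: "alpha a (nab n x') = nab 3 x" .
    have e1: "u \<otimes>\<^bsub>SD\<^esub> h = (a \<otimes>\<^bsub>Qm\<^esub> inv\<^bsub>Qm\<^esub> (xbd Q n x), alpha (inv\<^bsub>Qm\<^esub> (xbd Q n x)) m \<otimes>\<^bsub>Kn\<^esub> nab n x)"
      using am xn by (simp add: gN_def SD_mult)
    have e2: "gN x' \<otimes>\<^bsub>SD\<^esub> u = (inv\<^bsub>Qm\<^esub> (xbd Q n x') \<otimes>\<^bsub>Qm\<^esub> a, alpha a (nab n x') \<otimes>\<^bsub>Kn\<^esub> m)"
      using am by (simp add: gN_def SD_mult)
    have at: "alpha (inv\<^bsub>Qm\<^esub> (xbd Q n x)) m = m" using alpha_triv[OF xn(1)] am True by simp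
    have "u \<otimes>\<^bsub>SD\<^esub> h = gN x' \<otimes>\<^bsub>SD\<^esub> u"
      unfolding e1 e2 at c2 using c1 True am nx by (simp add: K3.m_comm)
    then have "u \<otimes>\<^bsub>SD\<^esub> h \<otimes>\<^bsub>SD\<^esub> inv\<^bsub>SD\<^esub> u = gN x'"
      using u gN_hom x' by (simp add: SD.m_assoc hom_def Pi_def)
    then show "u \<otimes>\<^bsub>SD\<^esub> h \<otimes>\<^bsub>SD\<^esub> inv\<^bsub>SD\<^esub> u \<in> NN" using x' by (simp add: NN_eq)
  qed
qed

lemma group_P: "group (po_P n Q K nab)"
  unfolding po_P_def using normal_NN by (rule normal.factorgroup_is_group)

end


lemma lift_carrier: "carrier (lift_monoid \<phi> \<psi> M) = \<phi> ` carrier M"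
  by (simp add: lift_monoid_def)
lemma lift_mult: "x \<otimes>\<^bsub>lift_monoid \<phi> \<psi> M\<^esub> y = \<phi> (\<psi> x \<otimes>\<^bsub>M\<^esub> \<psi> y)"
  by (simp add: lift_monoid_def)
lemma lift_one: "\<one>\<^bsub>lift_monoid \<phi> \<psi> M\<^esub> = \<phi> \<one>\<^bsub>M\<^esub>"
  by (simp add: lift_monoid_def)

lemma lift_group:
  assumes gM: "group M" and inv: "\<And>x. \<psi> (\<phi> x) = x"
  shows "group (lift_monoid \<phi> \<psi> M)"
proof -
  interpret M: group M by fact
  show ?thesis
  proof (rule groupI)
    fix x y assume "x \<in> carrier (lift_monoid \<phi> \<psi> M)" "y \<in> carrier (lift_monoid \<phi> \<psi> M)"
    then show "x \<otimes>\<^bsub>lift_monoid \<phi> \<psi> M\<^esub> y \<in> carrier (lift_monoid \<phi> \<psi> M)"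
      by (auto simp: lift_carrier lift_mult inv)
  next
    show "\<one>\<^bsub>lift_monoid \<phi> \<psi> M\<^esub> \<in> carrier (lift_monoid \<phi> \<psi> M)"
      by (simp add: lift_carrier lift_one)
  next
    fix x y z assume "x \<in> carrier (lift_monoid \<phi> \<psi> M)" "y \<in> carrier (lift_monoid \<phi> \<psi> M)"
      "z \<in> carrier (lift_monoid \<phi> \<psi> M)"
    then show "x \<otimes>\<^bsub>lift_monoid \<phi> \<psi> M\<^esub> y \<otimes>\<^bsub>lift_monoid \<phi> \<psi> M\<^esub> z =
               x \<otimes>\<^bsub>lift_monoid \<phi> \<psi> M\<^esub> (y \<otimes>\<^bsub>lift_monoid \<phi> \<psi> M\<^esub> z)"
      by (auto simp: lift_carrier lift_mult inv M.m_assoc)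
  next
    fix x assume "x \<in> carrier (lift_monoid \<phi> \<psi> M)"
    then show "\<one>\<^bsub>lift_monoid \<phi> \<psi> M\<^esub> \<otimes>\<^bsub>lift_monoid \<phi> \<psi> M\<^esub> x = x"
      by (auto simp: lift_carrier lift_mult lift_one inv)
  next
    fix x assume "x \<in> carrier (lift_monoid \<phi> \<psi> M)"
    then obtain a where a: "a \<in> carrier M" "x = \<phi> a" by (auto simp: lift_carrier)
    have "\<phi> (inv\<^bsub>M\<^esub> a) \<otimes>\<^bsub>lift_monoid \<phi> \<psi> M\<^esub> x = \<one>\<^bsub>lift_monoid \<phi> \<psi> M\<^esub>"
      using a by (simp add: lift_mult lift_one inv)
    moreover have "\<phi> (inv\<^bsub>M\<^esub> a) \<in> carrier (lift_monoid \<phi> \<psi> M)" using a by (simp add: lift_carrier)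
    ultimately show "\<exists>y\<in>carrier (lift_monoid \<phi> \<psi> M). y \<otimes>\<^bsub>lift_monoid \<phi> \<psi> M\<^esub> x = \<one>\<^bsub>lift_monoid \<phi> \<psi> M\<^esub>"
      by blast
  qed
qed

lemma lift_iso:
  assumes inv: "\<And>x. \<psi> (\<phi> x) = x"
  shows "\<phi> \<in> iso M (lift_monoid \<phi> \<psi> M)"
  unfolding iso_def bij_betw_def
  by (auto simp: hom_def lift_carrier lift_mult inv inj_on_def) (metis inv)

lemma lift_upd: "lift_monoid \<phi> \<psi> (M\<lparr>carrier := A\<rparr>) = (lift_monoid \<phi> \<psi> M)\<lparr>carrier := \<phi> ` A\<rparr>"
  by (simp add: lift_monoid_def)

context PO begin

abbreviation "PP \<equiv> pushout n Q K nab"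
abbreviation "PQ \<equiv> po_P n Q K nab"

lemma n2: "n - Suc 0 - Suc 0 = n - 2" by simp
lemma nm1_not_le: "\<not> n - Suc 0 \<le> n - 2" "n \<noteq> n - Suc 0" "\<not> n \<le> n - 2" using n3 by auto

lemma P_grp_low: "k \<le> n - 2 \<Longrightarrow> xgrp PP k = lift_monoid PLow lowv (xgrp Q k)"
  by (simp add: pushout_def)
lemma P_grp_mid: "xgrp PP (n - Suc 0) = lift_monoid PMid midv PQ"
  using nm1_not_le by (simp add: pushout_def)
lemma P_grp_top: "xgrp PP n = lift_monoid PTop topv Kn"
  using nm1_not_le by (simp add: pushout_def)
lemma P_bd_low: "k \<le> n - 2 \<Longrightarrow> xbd PP k x = PLow (xbd Q k (lowv x))"
  by (simp add: pushout_def)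
lemma P_bd_mid: "xbd PP (n - Suc 0) x = PLow (xbd Q (n - Suc 0) (fst (SOME p. p \<in> midv x)))"
  using nm1_not_le by (simp add: pushout_def)
lemma P_bd_top: "xbd PP n x = PMid (NN #>\<^bsub>SD\<^esub> (\<one>\<^bsub>Qm\<^esub>, topv x))"
  using nm1_not_le by (simp add: pushout_def)
lemma P_act_low: "k \<le> n - 2 \<Longrightarrow> xact PP k x c = PLow (xact Q k (lowv x) (lowv c))"
  by (simp add: pushout_def)
lemma P_act_mid: "xact PP (n - Suc 0) x c =
   PMid ((\<lambda>(a, m). (xact Q (n - Suc 0) (lowv x) a, xact K n (nab (Suc 0) (lowv x)) m)) ` midv c)"
  using nm1_not_le by (simp add: pushout_def)
lemma P_act_top: "xact PP n x c = PTop (xact K n (nab (Suc 0) (lowv x)) (topv c))"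
  using nm1_not_le by (simp add: pushout_def)

lemma PQ_carrier: "carrier PQ = rcosets\<^bsub>SD\<^esub> NN"
  by (simp add: po_P_def FactGroup_def)
lemma PQ_mult: "X \<otimes>\<^bsub>PQ\<^esub> Y = X <#>\<^bsub>SD\<^esub> Y"
  by (simp add: po_P_def)
lemma PQ_one: "\<one>\<^bsub>PQ\<^esub> = NN"
  by (simp add: po_P_def)

lemma PQ_cosets: "X \<in> carrier PQ \<Longrightarrow> \<exists>u\<in>carrier SD. X = NN #>\<^bsub>SD\<^esub> u"
  by (auto simp: PQ_carrier RCOSETS_def)

lemma rcos_sum_NN: "u \<in> carrier SD \<Longrightarrow> v \<in> carrier SD \<Longrightarrow>
  (NN #>\<^bsub>SD\<^esub> u) <#>\<^bsub>SD\<^esub> (NN #>\<^bsub>SD\<^esub> v) = NN #>\<^bsub>SD\<^esub> (u \<otimes>\<^bsub>SD\<^esub> v)"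
  using normal.rcos_sum[OF normal_NN] by simp

lemma coset_in: "u \<in> carrier SD \<Longrightarrow> NN #>\<^bsub>SD\<^esub> u \<in> carrier PQ"
  using group.rcosetsI[OF group_SD] subgroup.subset[OF subgroup_NN] by (simp add: PQ_carrier)

lemma self_in_coset: "u \<in> carrier SD \<Longrightarrow> u \<in> NN #>\<^bsub>SD\<^esub> u"
  using group.rcos_self[OF group_SD] subgroup_NN by blast

lemma coset_fun:
  assumes g: "g \<in> hom SD T" and gT: "group T" and triv: "\<And>h. h \<in> NN \<Longrightarrow> g h = \<one>\<^bsub>T\<^esub>"
    and u: "u \<in> carrier SD" and w: "w \<in> NN #>\<^bsub>SD\<^esub> u"
  shows "g w = g u"
proof -
  interpret T: group T by fact
  obtain h where h: "h \<in> NN" "w = h \<otimes>\<^bsub>SD\<^esub> u" using w unfolding r_coset_def by auto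
  have hc: "h \<in> carrier SD" using h subgroup.subset[OF subgroup_NN] by auto
  have "g w = g h \<otimes>\<^bsub>T\<^esub> g u" using h hc u g by (simp add: hom_mult)
  also have "\<dots> = g u"
  proof -
    have "g u \<in> carrier T" using g u by (auto simp: hom_def)
    then show ?thesis using triv[OF h(1)] by simp
  qed
  finally show ?thesis .
qed

lemma coset_some:
  assumes g: "g \<in> hom SD T" and gT: "group T" and triv: "\<And>h. h \<in> NN \<Longrightarrow> g h = \<one>\<^bsub>T\<^esub>"
    and u: "u \<in> carrier SD"
  shows "g (SOME w. w \<in> NN #>\<^bsub>SD\<^esub> u) = g u"
  using coset_fun[OF g gT triv u, of "SOME w. w \<in> NN #>\<^bsub>SD\<^esub> u"]
    someI[where P="\<lambda>w. w \<in> NN #>\<^bsub>SD\<^esub> u", OF self_in_coset[OF u]]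
  by blast

lemma coset_some_mem:
  assumes u: "u \<in> carrier SD"
  shows "(SOME w. w \<in> NN #>\<^bsub>SD\<^esub> u) \<in> NN #>\<^bsub>SD\<^esub> u"
  using someI[where P="\<lambda>w. w \<in> NN #>\<^bsub>SD\<^esub> u", OF self_in_coset[OF u]] .

lemma groups_P: "1 \<le> k \<Longrightarrow> k \<le> n \<Longrightarrow> group (xgrp PP k)"
proof -
  assume k: "1 \<le> k" "k \<le> n"
  consider "k \<le> n - 2" | "k = n - Suc 0" | "k = n" using k by linarith
  then show ?thesis
  proof cases
    case 1
    then show ?thesis using rxc_grp[OF Q k] by (auto simp: P_grp_low intro!: lift_group)
  next
    case 2
    then show ?thesis using group_P by (auto simp: P_grp_mid intro!: lift_group)
  next
    case 3
    then show ?thesis using gKn by (auto simp: P_grp_top intro!: lift_group)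
  qed
qed

end


context PO begin

abbreviation "Q2 \<equiv> xgrp Q (n - 2)"

lemma gQ2: "group Q2" using rxc_grp[OF Q, of "n - 2"] n3 by simp

lemma bd_mid_hom: "xbd Q (n - Suc 0) \<in> hom Qm Q2"
proof -
  have "n - Suc 0 - 1 = n - 2" by simp
  then show ?thesis using rxc_bd[OF Q, of "n - Suc 0"] n3 by simp
qed

definition theta :: "'q \<times> 'k \<Rightarrow> 'q" where "theta u = xbd Q (n - Suc 0) (fst u)"

lemma theta_hom: "theta \<in> hom SD Q2"
  using bd_mid_hom by (auto simp: hom_def theta_def SD_carrier SD_mult)

lemma theta_triv: "h \<in> NN \<Longrightarrow> theta h = \<one>\<^bsub>Q2\<^esub>"
proof -
  assume "h \<in> NN"
  then obtain x where x: "x \<in> carrier (xgrp Q n)" "h = gN x" by (auto simp: NN_eq)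
  interpret d: group_hom Qm Q2 "xbd Q (n - Suc 0)"
    using gQm gQ2 bd_mid_hom unfolding group_hom_def group_hom_axioms_def by simp
  have "xbd Q (n - Suc 0) (xbd Q n x) = \<one>\<^bsub>xgrp Q (n - 2)\<^esub>"
    using rxc_dd[OF Q, of n x] x n3 by simp
  then show ?thesis using x bdn_closed[OF x(1)] by (simp add: theta_def gN_def)
qed

lemma P_bd_coset: "u \<in> carrier SD \<Longrightarrow> xbd PP (n - Suc 0) (PMid (NN #>\<^bsub>SD\<^esub> u)) = PLow (theta u)"
  using coset_some[OF theta_hom gQ2 theta_triv] by (simp add: P_bd_mid theta_def)

end

locale PH =
  fixes n :: nat and Q :: "'q xcx" and H :: "'h xcx" and G :: "'g xcx"
    and p :: "nat \<Rightarrow> 'q \<Rightarrow> 'h" and f :: "nat \<Rightarrow> 'q \<Rightarrow> 'g"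
  assumes n3': "3 \<le> n" and Q': "rxc n Q" and H: "rxc n H" and G: "rxc n G"
    and p: "tfib n Q H p" and f: "xmor n Q G f"

lemma (in PH) pmor: "xmor n Q H p" using p by (simp add: tfib_def fib_def)

sublocale PH \<subseteq> PO n Q "xprod H G" "npair p f"
  using n3' Q' rxc_xprod[OF H G] xmor_npair[OF pmor f] by unfold_locales auto

context PH begin

abbreviation "Hm \<equiv> xgrp H (n - Suc 0)"
abbreviation "phi \<equiv> xcomp proj1 (po_rho n Q (xprod H G) (npair p f))"

definition psi :: "'q \<times> ('h \<times> 'g) \<Rightarrow> 'h" where
  "psi u = p (n - Suc 0) (fst u) \<otimes>\<^bsub>Hm\<^esub> xbd H n (fst (snd u))"

lemma gHm: "group Hm" using rxc_grp[OF H, of "n - Suc 0"] n3 by simp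
lemma gHn: "group (xgrp H n)" using rxc_grp[OF H, of "n"] n3 by simp

lemma phi_low: "k \<le> n - 2 \<Longrightarrow> phi k x = p k (lowv x)"
  by (simp add: xcomp_def proj1_def po_rho_def npair_def)
lemma phi_mid: "phi (n - Suc 0) X = psi (SOME q. q \<in> midv X)"
  using nm1_not_le
  by (simp add: xcomp_def proj1_def po_rho_def npair_def psi_def split: prod.split)
lemma phi_top: "phi n x = fst (topv x)"
  using nm1_not_le by (simp add: xcomp_def proj1_def po_rho_def npair_def)

lemma p_hom: "1 \<le> k \<Longrightarrow> k \<le> n \<Longrightarrow> p k \<in> hom (xgrp Q k) (xgrp H k)"
  using xmor_hom[OF pmor] by simp

lemma psi_hom: "psi \<in> hom SD Hm"
proof (rule homI)
  interpret Hm: group Hm by (rule gHm)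
  interpret dH: group_hom "xgrp H n" Hm "xbd H n" using rxc_bd_gh[OF H, of n] n3 by simp
  interpret pm: group_hom Qm Hm "p (n - Suc 0)"
    using gQm gHm p_hom[of "n - Suc 0"] n3 unfolding group_hom_def group_hom_axioms_def by simp
  fix u assume "u \<in> carrier SD"
  then show "psi u \<in> carrier Hm"
    by (auto simp: psi_def SD_carrier)
next
  interpret Hm: group Hm by (rule gHm)
  interpret Qm: group Qm by (rule gQm)
  interpret dH: group_hom "xgrp H n" Hm "xbd H n" using rxc_bd_gh[OF H, of n] n3 by simp
  interpret pm: group_hom Qm Hm "p (n - Suc 0)"
    using gQm gHm p_hom[of "n - Suc 0"] n3 unfolding group_hom_def group_hom_axioms_def by simp
  fix u v assume u: "u \<in> carrier SD" and v: "v \<in> carrier SD"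
  obtain a b c where abc: "u = (a, (b, c))" "a \<in> carrier Qm" "b \<in> carrier (xgrp H n)" "c \<in> carrier (xgrp G n)"
    using u by (auto simp: SD_carrier)
  obtain a' b' c' where abc': "v = (a', (b', c'))" "a' \<in> carrier Qm" "b' \<in> carrier (xgrp H n)" "c' \<in> carrier (xgrp G n)"
    using v by (auto simp: SD_carrier)
  have am: "alpha a' (b, c) \<in> carrier (xgrp H n) \<times> carrier (xgrp G n)"
    using alpha_closed[of a' "(b, c)"] abc abc' by simp
  have key: "xbd H n (fst (alpha a' (b, c))) =
      inv\<^bsub>Hm\<^esub> (p (n - Suc 0) a') \<otimes>\<^bsub>Hm\<^esub> xbd H n b \<otimes>\<^bsub>Hm\<^esub> p (n - Suc 0) a'"
  proof (cases "n = 3")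
    case True
    interpret Q2': group "xgrp Q 2" using rxc_grp[OF Q, of 2] True by simp
    interpret H2: group "xgrp H 2" using rxc_grp[OF H, of 2] True by simp
    have a2: "a' \<in> carrier (xgrp Q 2)" using abc' True by simp
    have ia: "inv\<^bsub>xgrp Q 2\<^esub> a' \<in> carrier (xgrp Q 2)" using a2 by simp
    have pia: "p 2 (inv\<^bsub>xgrp Q 2\<^esub> a') \<in> carrier (xgrp H 2)" and pa: "p 2 a' \<in> carrier (xgrp H 2)"
      using p_hom[of 2] ia a2 True by (auto simp: hom_def)
    have b3: "b \<in> carrier (xgrp H 3)" using abc True by simp
    have db: "xbd H 3 b \<in> carrier (xgrp H 2)" using rxc_bd[OF H, of 3] b3 True by (auto simp: hom_def)
    have ph: "p (Suc 0) (xbd Q 2 (inv\<^bsub>xgrp Q 2\<^esub> a')) = xbd H 2 (p 2 (inv\<^bsub>xgrp Q 2\<^esub> a'))"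
      using xmor_bd[OF pmor, of 2] ia True by simp
    have dia: "xbd H 2 (p 2 (inv\<^bsub>xgrp Q 2\<^esub> a')) \<in> carrier (xgrp H (Suc 0))"
      using rxc_bd[OF H, of 2] pia True by (auto simp: hom_def)
    have ip: "p 2 (inv\<^bsub>xgrp Q 2\<^esub> a') = inv\<^bsub>xgrp H 2\<^esub> (p 2 a')"
      using pm.hom_inv[of a'] abc' True by simp
    have "fst (alpha a' (b, c)) = xact H 3 (p (Suc 0) (xbd Q 2 (inv\<^bsub>xgrp Q 2\<^esub> a'))) b"
      unfolding alpha_def using True by (simp add: npair_def)
    then have "xbd H n (fst (alpha a' (b, c))) = xbd H 3 (xact H 3 (xbd H 2 (p 2 (inv\<^bsub>xgrp Q 2\<^esub> a'))) b)"
      using True ph by simp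
    also have "\<dots> = xact H 2 (xbd H 2 (p 2 (inv\<^bsub>xgrp Q 2\<^esub> a'))) (xbd H 3 b)"
      using rxc_equi[OF H, of 3] dia b3 True by simp
    also have "\<dots> = p 2 (inv\<^bsub>xgrp Q 2\<^esub> a') \<otimes>\<^bsub>xgrp H 2\<^esub> xbd H 3 b \<otimes>\<^bsub>xgrp H 2\<^esub> inv\<^bsub>xgrp H 2\<^esub> p 2 (inv\<^bsub>xgrp Q 2\<^esub> a')"
      using rxc_cm2[OF H pia db] .
    also have "\<dots> = inv\<^bsub>xgrp H 2\<^esub> (p 2 a') \<otimes>\<^bsub>xgrp H 2\<^esub> xbd H 3 b \<otimes>\<^bsub>xgrp H 2\<^esub> p 2 a'"
      using ip pa by simp
    finally show ?thesis using True by simp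
  next
    case False
    interpret Hc: comm_group Hm using rxc_comm[OF H, of "n - Suc 0"] n3 False by simp
    have pa: "p (n - Suc 0) a' \<in> carrier Hm" using abc' by simp
    have db: "xbd H n b \<in> carrier Hm" using abc by simp
    have "inv\<^bsub>Hm\<^esub> (p (n - Suc 0) a') \<otimes>\<^bsub>Hm\<^esub> xbd H n b \<otimes>\<^bsub>Hm\<^esub> p (n - Suc 0) a' = xbd H n b"
      using pa db by (metis Hm.inv_closed Hc.m_comm Hm.inv_solve_right Hm.m_closed Hm.m_assoc Hm.l_inv Hm.l_one)
    then show ?thesis using False by (simp add: alpha_def)
  qed
  have pa: "p (n - Suc 0) a' \<in> carrier Hm" "p (n - Suc 0) a \<in> carrier Hm" using abc abc' by auto
  have db: "xbd H n b \<in> carrier Hm" "xbd H n b' \<in> carrier Hm" using abc abc' by auto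
  have fam: "fst (alpha a' (b, c)) \<in> carrier (xgrp H n)" using am by auto
  have "psi (u \<otimes>\<^bsub>SD\<^esub> v) = p (n - Suc 0) a \<otimes>\<^bsub>Hm\<^esub> p (n - Suc 0) a' \<otimes>\<^bsub>Hm\<^esub>
      (xbd H n (fst (alpha a' (b, c))) \<otimes>\<^bsub>Hm\<^esub> xbd H n b')"
    using abc abc' am by (auto simp: psi_def SD_mult)
  also have "\<dots> = psi u \<otimes>\<^bsub>Hm\<^esub> psi v"
  proof -
    have cancel: "\<And>y. y \<in> carrier Hm \<Longrightarrow> p (n - Suc 0) a' \<otimes>\<^bsub>Hm\<^esub> (inv\<^bsub>Hm\<^esub> p (n - Suc 0) a' \<otimes>\<^bsub>Hm\<^esub> y) = y"
      using pa by (simp add: Hm.m_assoc[symmetric])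
    show ?thesis unfolding key using abc abc' pa db by (simp add: psi_def Hm.m_assoc cancel)
  qed
  finally show "psi (u \<otimes>\<^bsub>SD\<^esub> v) = psi u \<otimes>\<^bsub>Hm\<^esub> psi v" .
qed

lemma psi_triv: "h \<in> NN \<Longrightarrow> psi h = \<one>\<^bsub>Hm\<^esub>"
proof -
  assume "h \<in> NN"
  then obtain x where x: "x \<in> carrier (xgrp Q n)" "h = gN x" by (auto simp: NN_eq)
  interpret Hm: group Hm by (rule gHm)
  interpret pm: group_hom Qm Hm "p (n - Suc 0)"
    using gQm gHm p_hom[of "n - Suc 0"] n3 unfolding group_hom_def group_hom_axioms_def by simp
  have e: "p (n - Suc 0) (xbd Q n x) = xbd H n (p n x)" using xmor_bd[OF pmor, of n x] x n3 by simp
  have "xbd H n (p n x) \<in> carrier Hm" using e bdn_closed[OF x(1)] by (metis pm.hom_closed)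
  then have "psi (gN x) = \<one>\<^bsub>Hm\<^esub>" using bdn_closed[OF x(1)] e unfolding gN_def
    by (simp add: psi_def npair_def)
  then show ?thesis using x by simp
qed

lemma phi_coset: "u \<in> carrier SD \<Longrightarrow> phi (n - Suc 0) (PMid (NN #>\<^bsub>SD\<^esub> u)) = psi u"
  using coset_some[OF psi_hom gHm psi_triv] by (simp add: phi_mid)

end


context PO begin

lemma P_car_low: "k \<le> n - 2 \<Longrightarrow> carrier (xgrp PP k) = PLow ` carrier (xgrp Q k)"
  by (simp add: P_grp_low lift_carrier)
lemma P_car_mid: "carrier (xgrp PP (n - Suc 0)) = PMid ` carrier PQ"
  by (simp add: P_grp_mid lift_carrier)
lemma P_car_top: "carrier (xgrp PP n) = PTop ` carrier Kn"
  by (simp add: P_grp_top lift_carrier)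
lemma P_mult_low: "k \<le> n - 2 \<Longrightarrow> PLow x \<otimes>\<^bsub>xgrp PP k\<^esub> PLow y = PLow (x \<otimes>\<^bsub>xgrp Q k\<^esub> y)"
  by (simp add: P_grp_low lift_mult)
lemma P_mult_mid: "PMid X \<otimes>\<^bsub>xgrp PP (n - Suc 0)\<^esub> PMid Y = PMid (X <#>\<^bsub>SD\<^esub> Y)"
  by (simp add: P_grp_mid lift_mult PQ_mult)
lemma P_mult_top: "PTop x \<otimes>\<^bsub>xgrp PP n\<^esub> PTop y = PTop (x \<otimes>\<^bsub>Kn\<^esub> y)"
  by (simp add: P_grp_top lift_mult)

lemma P_mid_cases:
  assumes "X \<in> carrier (xgrp PP (n - Suc 0))"
  obtains u where "u \<in> carrier SD" "X = PMid (NN #>\<^bsub>SD\<^esub> u)"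
proof -
  obtain Y where "Y \<in> carrier PQ" "X = PMid Y" using assms by (auto simp: P_car_mid)
  then show ?thesis using PQ_cosets that by blast
qed

lemma one_SD_N: "\<one>\<^bsub>SD\<^esub> \<in> NN"
  using subgroup.one_closed[OF subgroup_NN] .

end

context PH begin

lemma psi_closed: "u \<in> carrier SD \<Longrightarrow> psi u \<in> carrier Hm"
  using psi_hom by (auto simp: hom_def)

lemma phi_hom: "1 \<le> k \<Longrightarrow> k \<le> n \<Longrightarrow> phi k \<in> hom (xgrp PP k) (xgrp H k)"
proof -
  assume k: "1 \<le> k" "k \<le> n"
  consider "k \<le> n - 2" | "k = n - Suc 0" | "k = n" using k by linarith
  then show ?thesis
  proof cases
    case 1
    show ?thesis
    proof (rule homI)
      fix x assume "x \<in> carrier (xgrp PP k)"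
      then obtain x' where x': "x' \<in> carrier (xgrp Q k)" "x = PLow x'" using 1 by (auto simp: P_car_low)
      then show "phi k x \<in> carrier (xgrp H k)" using p_hom[OF k] 1 by (auto simp: phi_low hom_def)
    next
      fix x y assume "x \<in> carrier (xgrp PP k)" "y \<in> carrier (xgrp PP k)"
      then obtain x' y' where "x' \<in> carrier (xgrp Q k)" "x = PLow x'" "y' \<in> carrier (xgrp Q k)" "y = PLow y'"
        using 1 by (auto simp: P_car_low)
      then show "phi k (x \<otimes>\<^bsub>xgrp PP k\<^esub> y) = phi k x \<otimes>\<^bsub>xgrp H k\<^esub> phi k y"
        using p_hom[OF k] 1 by (simp add: phi_low P_mult_low hom_mult)
    qed
  next
    case 2
    show ?thesis unfolding 2
    proof (rule homI)
      fix x assume "x \<in> carrier (xgrp PP (n - Suc 0))"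
      then obtain u where "u \<in> carrier SD" "x = PMid (NN #>\<^bsub>SD\<^esub> u)" by (rule P_mid_cases)
      then show "phi (n - Suc 0) x \<in> carrier Hm" by (simp add: phi_coset psi_closed)
    next
      fix x y assume "x \<in> carrier (xgrp PP (n - Suc 0))" "y \<in> carrier (xgrp PP (n - Suc 0))"
      then obtain u v where uv: "u \<in> carrier SD" "x = PMid (NN #>\<^bsub>SD\<^esub> u)" "v \<in> carrier SD"
        "y = PMid (NN #>\<^bsub>SD\<^esub> v)" by (metis P_mid_cases)
      have "u \<otimes>\<^bsub>SD\<^esub> v \<in> carrier SD" using uv group.subgroup_self[OF group_SD]
        by (simp add: group.is_monoid[OF group_SD] monoid.m_closed)
      then show "phi (n - Suc 0) (x \<otimes>\<^bsub>xgrp PP (n - Suc 0)\<^esub> y) = phi (n - Suc 0) x \<otimes>\<^bsub>Hm\<^esub> phi (n - Suc 0) y"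
        using uv psi_hom by (simp add: P_mult_mid rcos_sum_NN phi_coset hom_mult)
    qed
  next
    case 3
    show ?thesis unfolding 3
    proof (rule homI)
      fix x assume "x \<in> carrier (xgrp PP n)"
      then show "phi n x \<in> carrier (xgrp H n)" by (auto simp: P_car_top phi_top)
    next
      fix x y assume "x \<in> carrier (xgrp PP n)" "y \<in> carrier (xgrp PP n)"
      then show "phi n (x \<otimes>\<^bsub>xgrp PP n\<^esub> y) = phi n x \<otimes>\<^bsub>xgrp H n\<^esub> phi n y"
        by (auto simp: P_car_top phi_top P_mult_top)
    qed
  qed
qed

end


context PH begin

lemma npair_app: "npair p f k x = (p k x, f k x)" by (simp add: npair_def)

lemma p_hom_m: "p (n - Suc 0) \<in> hom Qm Hm" using p_hom[of "n - Suc 0"] n3 by simp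
lemma pa_closed: "a \<in> carrier Qm \<Longrightarrow> p (n - Suc 0) a \<in> carrier Hm"
  using p_hom_m by (auto simp: hom_def)

lemma p_bd: "2 \<le> k \<Longrightarrow> k \<le> n \<Longrightarrow> c \<in> carrier (xgrp Q k) \<Longrightarrow> p (k-1) (xbd Q k c) = xbd H k (p k c)"
  using xmor_bd[OF pmor] by simp

lemma psi_beta:
  assumes x: "x \<in> carrier (xgrp Q (Suc 0))" and w: "w \<in> carrier SD"
  shows "psi ((\<lambda>(a, m). (xact Q (n - Suc 0) x a, xact (xprod H G) n (npair p f (Suc 0) x) m)) w)
       = xact H (n - Suc 0) (p (Suc 0) x) (psi w)"
proof -
  obtain a b c where abc: "w = (a, (b, c))" "a \<in> carrier Qm" "b \<in> carrier (xgrp H n)" "c \<in> carrier (xgrp G n)"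
    using w by (auto simp: SD_carrier)
  have px: "p (Suc 0) x \<in> carrier (xgrp H (Suc 0))" using p_hom[of "Suc 0"] x n3 by (auto simp: hom_def)
  interpret act: group_hom Hm Hm "xact H (n - Suc 0) (p (Suc 0) x)"
    using rxc_act_gh[OF H, of "n - Suc 0"] px n3 by simp
  interpret pm: group_hom Qm Hm "p (n - Suc 0)"
    using gQm gHm p_hom[of "n - Suc 0"] n3 unfolding group_hom_def group_hom_axioms_def by simp
  interpret dH: group_hom "xgrp H n" Hm "xbd H n" using rxc_bd_gh[OF H, of n] n3 by simp
  have "p (n - Suc 0) (xact Q (n - Suc 0) x a) = xact H (n - Suc 0) (p (Suc 0) x) (p (n - Suc 0) a)"
    using xmor_act[OF pmor, of "n - Suc 0" x a] x abc n3 by simp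
  moreover have "xbd H n (xact H n (p (Suc 0) x) b) = xact H (n - Suc 0) (p (Suc 0) x) (xbd H n b)"
    using rxc_equi[OF H, of n] px abc n3 by simp
  ultimately show ?thesis using abc by (simp add: psi_def npair_def)
qed

lemma phi_xmor: "xmor n PP H phi"
  unfolding xmor_def
proof (intro conjI ballI)
  fix k assume "k \<in> {1..n}"
  then show "phi k \<in> hom (xgrp PP k) (xgrp H k)" using phi_hom by simp
next
  fix k c assume k: "k \<in> {2..n}" and c: "c \<in> carrier (xgrp PP k)"
  consider "k \<le> n - 2" | "k = n - Suc 0" | "k = n" using k[simplified] by atomize_elim linarith
  then show "phi (k - 1) (xbd PP k c) = xbd H k (phi k c)"
  proof cases
    case 1
    obtain x where x: "x \<in> carrier (xgrp Q k)" "c = PLow x" using c 1 by (auto simp: P_car_low)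
    have "k - 1 \<le> n - 2" using 1 by simp
    then show ?thesis using x 1 k p_bd[of k x] by (simp add: P_bd_low phi_low)
  next
    case 2
    obtain u where u: "u \<in> carrier SD" "c = PMid (NN #>\<^bsub>SD\<^esub> u)" using c 2 by (metis P_mid_cases)
    obtain a m where am: "u = (a, m)" "a \<in> carrier Qm" "m \<in> carrier (xgrp H n) \<times> carrier (xgrp G n)"
      using u by (auto simp: SD_carrier)
    have km: "k - 1 = n - 2" using 2 by simp
    have "phi (k - 1) (xbd PP k c) = p (n - 2) (xbd Q (n - Suc 0) a)"
      unfolding km using u 2 am by (simp add: P_bd_coset phi_low theta_def)
    also have "\<dots> = xbd H (n - Suc 0) (p (n - Suc 0) a)"
      using p_bd[of "n - Suc 0" a] am n3 by (simp add: numeral_2_eq_2)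
    also have "\<dots> = xbd H (n - Suc 0) (psi u)"
    proof -
      interpret d: group_hom Hm "xgrp H (n - 2)" "xbd H (n - Suc 0)"
        using rxc_bd_gh[OF H, of "n - Suc 0"] n3 by (simp add: numeral_2_eq_2)
      have pa: "p (n - Suc 0) a \<in> carrier Hm" using am pa_closed by simp
      have db: "xbd H n (fst m) \<in> carrier Hm" and dd: "xbd H (n - Suc 0) (xbd H n (fst m)) = \<one>\<^bsub>xgrp H (n - 2)\<^esub>"
        using am rxc_bd[OF H, of n] rxc_dd[OF H, of n "fst m"] n3 by (auto simp: hom_def)
      show ?thesis using am pa db dd by (simp add: psi_def)
    qed
    finally show ?thesis using u 2 by (simp add: phi_coset)
  next
    case 3
    obtain m where m: "m \<in> carrier Kn" "c = PTop m" using c 3 by (auto simp: P_car_top)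
    have u: "(\<one>\<^bsub>Qm\<^esub>, m) \<in> carrier SD" using m gQm by (simp add: SD_carrier group.is_monoid monoid.one_closed)
    have km: "k - 1 = n - Suc 0" using 3 by simp
    interpret Hm: group Hm by (rule gHm)
    interpret pm: group_hom Qm Hm "p (n - Suc 0)"
      using gQm gHm p_hom[of "n - Suc 0"] n3 unfolding group_hom_def group_hom_axioms_def by simp
    have db: "xbd H n (fst m) \<in> carrier Hm" using m rxc_bd[OF H, of n] n3 by (auto simp: hom_def)
    show ?thesis unfolding km using 3 m u db by (simp add: P_bd_top phi_coset phi_top psi_def)
  qed
next
  fix k x c assume k: "k \<in> {2..n}" and x: "x \<in> carrier (xgrp PP 1)" and c: "c \<in> carrier (xgrp PP k)"
  have n1: "Suc 0 \<le> n - 2" using n3 by simp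
  obtain x' where x': "x' \<in> carrier (xgrp Q (Suc 0))" "x = PLow x'" using x n1 by (auto simp: P_car_low)
  have phi1: "phi 1 x = p (Suc 0) x'" using x' n1 by (simp add: phi_low)
  consider "k \<le> n - 2" | "k = n - Suc 0" | "k = n" using k[simplified] by atomize_elim linarith
  then show "phi k (xact PP k x c) = xact H k (phi 1 x) (phi k c)"
  proof cases
    case 1
    obtain y where y: "y \<in> carrier (xgrp Q k)" "c = PLow y" using c 1 by (auto simp: P_car_low)
    show ?thesis using y x' 1 k xmor_act[OF pmor, of k x' y] phi1 by (simp add: P_act_low phi_low)
  next
    case 2
    obtain u where u: "u \<in> carrier SD" "c = PMid (NN #>\<^bsub>SD\<^esub> u)" using c 2 by (metis P_mid_cases)
    define \<beta> where "\<beta> = (\<lambda>(a, m). (xact Q (n - Suc 0) x' a, xact (xprod H G) n (npair p f (Suc 0) x') m))"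
    have e: "xact PP k x c = PMid (\<beta> ` (NN #>\<^bsub>SD\<^esub> u))"
      using 2 u x' by (simp add: P_act_mid \<beta>_def)
    have "(SOME q. q \<in> \<beta> ` (NN #>\<^bsub>SD\<^esub> u)) \<in> \<beta> ` (NN #>\<^bsub>SD\<^esub> u)"
      using self_in_coset[OF u(1)] by (meson image_eqI someI)
    then obtain w where w: "w \<in> NN #>\<^bsub>SD\<^esub> u" "(SOME q. q \<in> \<beta> ` (NN #>\<^bsub>SD\<^esub> u)) = \<beta> w" by auto
    have wc: "w \<in> carrier SD"
      using w(1) subgroup.elemrcos_carrier[OF subgroup_NN group_SD u(1)] by blast
    have "phi k (xact PP k x c) = psi (\<beta> w)" using e w 2 by (simp add: phi_mid)
    also have "\<dots> = xact H (n - Suc 0) (p (Suc 0) x') (psi w)"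
      unfolding \<beta>_def by (rule psi_beta[OF x'(1) wc])
    also have "psi w = psi u" using coset_fun[OF psi_hom gHm psi_triv u(1) w(1)] .
    finally show ?thesis using 2 u phi1 by (simp add: phi_coset)
  next
    case 3
    obtain m where m: "m \<in> carrier Kn" "c = PTop m" using c 3 by (auto simp: P_car_top)
    have "phi k (xact PP k x c) = fst (xact (xprod H G) n (npair p f (Suc 0) x') m)"
      using m 3 x' by (simp add: P_act_top phi_top)
    also have "\<dots> = xact H n (p (Suc 0) x') (fst m)"
      by (cases m) (simp add: npair_app)
    finally show ?thesis using m 3 phi1 by (simp add: phi_top)
  qed
qed

lemma phi_fib: "fib n PP H phi"
  unfolding fib_def
proof (intro conjI ballI phi_xmor)
  fix k assume k: "k \<in> {1..n}"
  have surj_p: "p k ` carrier (xgrp Q k) = carrier (xgrp H k)" using p k by (simp add: tfib_def fib_def)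
  consider "k \<le> n - 2" | "k = n - Suc 0" | "k = n" using k[simplified] by atomize_elim linarith
  then show "phi k ` carrier (xgrp PP k) = carrier (xgrp H k)"
  proof cases
    case 1
    then show ?thesis using surj_p by (simp add: P_car_low phi_low image_image)
  next
    case 2
    show ?thesis
    proof
      show "phi k ` carrier (xgrp PP k) \<subseteq> carrier (xgrp H k)"
        using phi_hom[of k] k by (auto simp: hom_def)
      show "carrier (xgrp H k) \<subseteq> phi k ` carrier (xgrp PP k)"
      proof
        fix y assume "y \<in> carrier (xgrp H k)"
        then obtain a where a: "a \<in> carrier Qm" "y = p (n - Suc 0) a" using surj_p 2 by auto
        have u: "(a, \<one>\<^bsub>Kn\<^esub>) \<in> carrier SD" using a gKn
          by (simp add: SD_carrier group.is_monoid monoid.one_closed del: xgrp_xprod)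
        interpret Hm: group Hm by (rule gHm)
        interpret dH: group_hom "xgrp H n" Hm "xbd H n" using rxc_bd_gh[OF H, of n] n3 by simp
        have "p (n - Suc 0) \<in> hom Qm Hm" using p_hom[of "n - Suc 0"] n3 by simp
        then have "p (n - Suc 0) a \<in> carrier Hm" using a by (auto simp: hom_def)
        then have "phi k (PMid (NN #>\<^bsub>SD\<^esub> (a, \<one>\<^bsub>Kn\<^esub>))) = y"
          using u a 2 by (simp add: phi_coset psi_def)
        moreover have "PMid (NN #>\<^bsub>SD\<^esub> (a, \<one>\<^bsub>Kn\<^esub>)) \<in> carrier (xgrp PP k)"
          using coset_in[OF u] 2 by (simp add: P_car_mid)
        ultimately show "y \<in> phi k ` carrier (xgrp PP k)" by (metis image_eqI)
      qed
    qed
  next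
    case 3
    have "\<one>\<^bsub>xgrp G n\<^esub> \<in> carrier (xgrp G n)" using rxc_grp[OF G, of n] n3
      by (auto intro: monoid.one_closed group.is_monoid)
    then have "carrier (xgrp G n) \<noteq> {}" by blast
    then show ?thesis using 3 by (auto simp: P_car_top phi_top image_image)
  qed
qed

end


context PO begin

lemma ker_low:
  assumes k: "2 \<le> k" "k \<le> n - 2"
  shows "kernel (xgrp PP k) (xgrp PP (k-1)) (xbd PP k) = PLow ` kernel (xgrp Q k) (xgrp Q (k-1)) (xbd Q k)"
proof -
  have k1: "k - 1 \<le> n - 2" using k by simp
  have o: "\<one>\<^bsub>xgrp PP (k-1)\<^esub> = PLow \<one>\<^bsub>xgrp Q (k-1)\<^esub>" using k1 by (simp add: P_grp_low lift_one)
  show ?thesis using k k1 o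
    by (auto simp: kernel_def P_car_low P_bd_low)
qed

lemma Sg_low:
  assumes k: "1 \<le> k" "k \<le> n - 2"
  shows "Sg PP k = lift_monoid PLow lowv (Sg Q k)"
proof (cases "k = 1")
  case True then show ?thesis using k by (simp add: Sg_def P_grp_low)
next
  case False
  then show ?thesis using k ker_low[of k] by (simp add: Sg_def P_grp_low lift_upd)
qed

lemma Bd_low:
  assumes k: "1 \<le> k" "k \<le> n - 2"
  shows "Bd PP k = PLow ` Bd Q k"
proof (cases "k + 1 \<le> n - 2")
  case True
  then show ?thesis by (simp add: Bd_def P_car_low P_bd_low image_image)
next
  case False
  then have k1: "k + 1 = n - Suc 0" using k by simp
  have "Bd PP k = xbd PP (n - Suc 0) ` carrier (xgrp PP (n - Suc 0))" unfolding Bd_def k1 ..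
  also have "\<dots> = (PLow ` xbd Q (n - Suc 0) ` carrier Qm :: ('q, 'k) po set)"
  proof
    show "xbd PP (n - Suc 0) ` carrier (xgrp PP (n - Suc 0)) \<subseteq> PLow ` xbd Q (n - Suc 0) ` carrier Qm"
    proof
      fix z assume "z \<in> xbd PP (n - Suc 0) ` carrier (xgrp PP (n - Suc 0))"
      then obtain X where X: "X \<in> carrier (xgrp PP (n - Suc 0))" "z = xbd PP (n - Suc 0) X" by auto
      then obtain u where u: "u \<in> carrier SD" "X = PMid (NN #>\<^bsub>SD\<^esub> u)" by (metis P_mid_cases)
      then show "z \<in> PLow ` xbd Q (n - Suc 0) ` carrier Qm"
        using X by (auto simp: P_bd_coset theta_def SD_carrier)
    qed
  next
    show "(PLow ` xbd Q (n - Suc 0) ` carrier Qm :: ('q, 'k) po set) \<subseteq> xbd PP (n - Suc 0) ` carrier (xgrp PP (n - Suc 0))"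
    proof
      fix z :: "('q, 'k) po" assume "z \<in> PLow ` xbd Q (n - Suc 0) ` carrier Qm"
      then obtain a where a: "a \<in> carrier Qm" "z = PLow (xbd Q (n - Suc 0) a)" by auto
      have u: "(a, \<one>\<^bsub>Kn\<^esub>) \<in> carrier SD" using a gKn by (simp add: SD_carrier group.is_monoid monoid.one_closed)
      have "z = xbd PP (n - Suc 0) (PMid (NN #>\<^bsub>SD\<^esub> (a, \<one>\<^bsub>Kn\<^esub>)))"
        using a u by (simp add: P_bd_coset theta_def)
      moreover have "PMid (NN #>\<^bsub>SD\<^esub> (a, \<one>\<^bsub>Kn\<^esub>)) \<in> carrier (xgrp PP (n - Suc 0))"
        using coset_in[OF u] by (simp add: P_car_mid)
      ultimately show "z \<in> xbd PP (n - Suc 0) ` carrier (xgrp PP (n - Suc 0))" by blast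
    qed
  qed
  also have "\<dots> = PLow ` Bd Q k" unfolding Bd_def k1 ..
  finally show ?thesis .
qed

lemma Sg_low_ok:
  assumes k: "1 \<le> k" "k \<le> n - 2"
  shows "group (Sg PP k) \<and> Bd PP k \<lhd> Sg PP k"
proof -
  have kn: "k < n" using k n3 by simp
  have gq: "group (Sg Q k)" and nq: "Bd Q k \<lhd> Sg Q k" using rxc_Sg[OF Q k(1) kn] by auto
  have gl: "group (lift_monoid PLow lowv (Sg Q k))" using gq by (auto intro!: lift_group)
  have "PLow ` Bd Q k \<lhd> lift_monoid PLow lowv (Sg Q k)"
    using iso_normal_subgroup[OF lift_iso gq gl nq] by simp
  then show ?thesis using gl Sg_low[OF k] Bd_low[OF k] by simp
qed

end


context PO begin

lemma P_grp_n2: "xgrp PP (n - 2) = lift_monoid PLow lowv Q2" by (simp add: P_grp_low)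

lemma theta_mult: "u \<in> carrier SD \<Longrightarrow> v \<in> carrier SD \<Longrightarrow> theta (u \<otimes>\<^bsub>SD\<^esub> v) = theta u \<otimes>\<^bsub>Q2\<^esub> theta v"
  using theta_hom by (simp add: hom_mult)

lemma SD_m_closed: "u \<in> carrier SD \<Longrightarrow> v \<in> carrier SD \<Longrightarrow> u \<otimes>\<^bsub>SD\<^esub> v \<in> carrier SD"
  using group_SD by (simp add: group.is_monoid monoid.m_closed)

lemma P_bd_mid_hom: "xbd PP (n - Suc 0) \<in> hom (xgrp PP (n - Suc 0)) (xgrp PP (n - 2))"
proof (rule homI)
  fix X assume "X \<in> carrier (xgrp PP (n - Suc 0))"
  then obtain u where u: "u \<in> carrier SD" "X = PMid (NN #>\<^bsub>SD\<^esub> u)" by (metis P_mid_cases)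
  have "theta u \<in> carrier Q2" using theta_hom u by (auto simp: hom_def)
  then show "xbd PP (n - Suc 0) X \<in> carrier (xgrp PP (n - 2))"
    using u by (simp add: P_bd_coset P_grp_n2 lift_carrier)
next
  fix X Y assume "X \<in> carrier (xgrp PP (n - Suc 0))" "Y \<in> carrier (xgrp PP (n - Suc 0))"
  then obtain u v where uv: "u \<in> carrier SD" "X = PMid (NN #>\<^bsub>SD\<^esub> u)" "v \<in> carrier SD"
    "Y = PMid (NN #>\<^bsub>SD\<^esub> v)" by (metis P_mid_cases)
  then show "xbd PP (n - Suc 0) (X \<otimes>\<^bsub>xgrp PP (n - Suc 0)\<^esub> Y) =
      xbd PP (n - Suc 0) X \<otimes>\<^bsub>xgrp PP (n - 2)\<^esub> xbd PP (n - Suc 0) Y"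
    by (simp add: P_mult_mid rcos_sum_NN P_bd_coset SD_m_closed theta_mult P_grp_n2 lift_mult)
qed

lemma gh_bd_mid: "group_hom (xgrp PP (n - Suc 0)) (xgrp PP (n - 2)) (xbd PP (n - Suc 0))"
  using groups_P[of "n - Suc 0"] groups_P[of "n - 2"] n3 P_bd_mid_hom
  unfolding group_hom_def group_hom_axioms_def by simp

lemma Sg_mid: "Sg PP (n - Suc 0) = (xgrp PP (n - Suc 0))\<lparr>carrier := kernel (xgrp PP (n - Suc 0)) (xgrp PP (n - 2)) (xbd PP (n - Suc 0))\<rparr>"
proof -
  have "n - Suc 0 \<noteq> 1" "n - Suc 0 - 1 = n - 2" using n3 by auto
  then show ?thesis unfolding Sg_def by simp
qed

lemma ker_mid_iff:
  assumes u: "u \<in> carrier SD"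
  shows "PMid (NN #>\<^bsub>SD\<^esub> u) \<in> carrier (Sg PP (n - Suc 0)) \<longleftrightarrow> theta u = \<one>\<^bsub>Q2\<^esub>"
  using coset_in[OF u] u
  by (auto simp: Sg_mid kernel_def P_car_mid P_bd_coset P_grp_n2 lift_one)

lemma ker_mid_cases:
  assumes "X \<in> carrier (Sg PP (n - Suc 0))"
  obtains u where "u \<in> carrier SD" "X = PMid (NN #>\<^bsub>SD\<^esub> u)" "theta u = \<one>\<^bsub>Q2\<^esub>"
proof -
  have "X \<in> carrier (xgrp PP (n - Suc 0))" using assms by (simp add: Sg_mid kernel_def)
  then obtain u where u: "u \<in> carrier SD" "X = PMid (NN #>\<^bsub>SD\<^esub> u)" by (metis P_mid_cases)
  then have "theta u = \<one>\<^bsub>Q2\<^esub>" using ker_mid_iff assms by blast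
  then show ?thesis using u that by blast
qed

lemma Bd_mid: "Bd PP (n - Suc 0) = (\<lambda>m. PMid (NN #>\<^bsub>SD\<^esub> (\<one>\<^bsub>Qm\<^esub>, m))) ` carrier Kn"
proof -
  have "n - Suc 0 + 1 = n" using n3 by simp
  then show ?thesis unfolding Bd_def by (simp add: P_car_top P_bd_top image_image)
qed

lemma alpha_ker:
  assumes a: "a \<in> carrier Qm" and ta: "xbd Q (n - Suc 0) a = \<one>\<^bsub>Q2\<^esub>" and m: "m \<in> carrier Kn"
  shows "alpha a m = m"
proof (cases "n = 3")
  case True
  interpret Q2': group "xgrp Q 2" using rxc_grp[OF Q, of 2] True by simp
  interpret d2: group_hom "xgrp Q 2" "xgrp Q (Suc 0)" "xbd Q 2" using rxc_bd_gh[OF Q, of 2] True by simp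
  interpret h: group_hom "xgrp Q (Suc 0)" "xgrp K (Suc 0)" "nab (Suc 0)"
    using rxc_grp[OF Q, of "Suc 0"] rxc_grp[OF K, of "Suc 0"] xmor_hom[OF nab, of "Suc 0"] True
    unfolding group_hom_def group_hom_axioms_def by simp
  have a2: "a \<in> carrier (xgrp Q 2)" and t2: "xbd Q 2 a = \<one>\<^bsub>xgrp Q (Suc 0)\<^esub>" using a ta True by auto
  have "xbd Q 2 (inv\<^bsub>xgrp Q 2\<^esub> a) = \<one>\<^bsub>xgrp Q (Suc 0)\<^esub>" using a2 t2 by (simp add: d2.hom_inv)
  then show ?thesis unfolding alpha_def using True m rxc_act_one[OF K, of 3 m] by simp
next
  case False then show ?thesis by (simp add: alpha_def)
qed

lemma ker_central:
  assumes a: "a \<in> carrier Qm" and ta: "xbd Q (n - Suc 0) a = \<one>\<^bsub>Q2\<^esub>" and b: "b \<in> carrier Qm"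
  shows "a \<otimes>\<^bsub>Qm\<^esub> b = b \<otimes>\<^bsub>Qm\<^esub> a"
proof (cases "n = 3")
  case True
  interpret Q2': group "xgrp Q 2" using rxc_grp[OF Q, of 2] True by simp
  have a2: "a \<in> carrier (xgrp Q 2)" and b2: "b \<in> carrier (xgrp Q 2)"
    and t2: "xbd Q 2 a = \<one>\<^bsub>xgrp Q (Suc 0)\<^esub>" using a b ta True by auto
  have "xact Q 2 (xbd Q 2 a) b = b" using t2 rxc_act_one[OF Q, of 2 b] b2 True by simp
  then have "a \<otimes>\<^bsub>xgrp Q 2\<^esub> b \<otimes>\<^bsub>xgrp Q 2\<^esub> inv\<^bsub>xgrp Q 2\<^esub> a = b" using rxc_cm2[OF Q a2 b2] by simp
  then have "a \<otimes>\<^bsub>xgrp Q 2\<^esub> b = b \<otimes>\<^bsub>xgrp Q 2\<^esub> a"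
    using a2 b2 by (metis Q2'.inv_solve_right Q2'.m_closed Q2'.inv_closed)
  then show ?thesis using True by simp
next
  case False
  interpret cg: comm_group Qm using rxc_comm[OF Q, of "n - Suc 0"] n3 False by simp
  show ?thesis using a b cg.m_comm by simp
qed

lemma SD_ker_comm:
  assumes u: "u \<in> carrier SD" "theta u = \<one>\<^bsub>Q2\<^esub>" and v: "v \<in> carrier SD" "theta v = \<one>\<^bsub>Q2\<^esub>"
  shows "u \<otimes>\<^bsub>SD\<^esub> v = v \<otimes>\<^bsub>SD\<^esub> u"
proof -
  interpret Kc: comm_group Kn by (rule cKn)
  obtain a m where am: "u = (a, m)" "a \<in> carrier Qm" "m \<in> carrier Kn" using u by (auto simp: SD_carrier)
  obtain b m' where bm: "v = (b, m')" "b \<in> carrier Qm" "m' \<in> carrier Kn" using v by (auto simp: SD_carrier)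
  have ta: "xbd Q (n - Suc 0) a = \<one>\<^bsub>Q2\<^esub>" and tb: "xbd Q (n - Suc 0) b = \<one>\<^bsub>Q2\<^esub>"
    using u v am bm by (auto simp: theta_def)
  show ?thesis using am bm ker_central[OF am(2) ta bm(2)] alpha_ker[OF am(2) ta] alpha_ker[OF bm(2) tb]
    by (simp add: SD_mult Kc.m_comm)
qed

lemma P_bd_top_hom: "xbd PP n \<in> hom (xgrp PP n) (xgrp PP (n - Suc 0))"
proof (rule homI)
  interpret Qm: group Qm by (rule gQm)
  fix X assume "X \<in> carrier (xgrp PP n)"
  then obtain m where m: "m \<in> carrier Kn" "X = PTop m" by (auto simp: P_car_top)
  then have "(\<one>\<^bsub>Qm\<^esub>, m) \<in> carrier SD" by (simp add: SD_carrier)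
  then show "xbd PP n X \<in> carrier (xgrp PP (n - Suc 0))"
    using m coset_in by (simp add: P_bd_top P_car_mid)
next
  interpret Qm: group Qm by (rule gQm)
  interpret Kn: group Kn by (rule gKn)
  fix X Y assume "X \<in> carrier (xgrp PP n)" "Y \<in> carrier (xgrp PP n)"
  then obtain m m' where m: "m \<in> carrier Kn" "X = PTop m" "m' \<in> carrier Kn" "Y = PTop m'"
    by (auto simp: P_car_top)
  have u: "(\<one>\<^bsub>Qm\<^esub>, m) \<in> carrier SD" "(\<one>\<^bsub>Qm\<^esub>, m') \<in> carrier SD" using m by (auto simp: SD_carrier)
  have "(\<one>\<^bsub>Qm\<^esub>, m) \<otimes>\<^bsub>SD\<^esub> (\<one>\<^bsub>Qm\<^esub>, m') = (\<one>\<^bsub>Qm\<^esub>, m \<otimes>\<^bsub>Kn\<^esub> m')"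
    using m by (simp add: SD_mult alpha_one)
  then show "xbd PP n (X \<otimes>\<^bsub>xgrp PP n\<^esub> Y) = xbd PP n X \<otimes>\<^bsub>xgrp PP (n - Suc 0)\<^esub> xbd PP n Y"
    using m u by (simp add: P_mult_top P_bd_top P_mult_mid rcos_sum_NN)
qed

lemma Sg_mid_ok: "group (Sg PP (n - Suc 0)) \<and> Bd PP (n - Suc 0) \<lhd> Sg PP (n - Suc 0)"
proof -
  interpret d: group_hom "xgrp PP (n - Suc 0)" "xgrp PP (n - 2)" "xbd PP (n - Suc 0)" by (rule gh_bd_mid)
  interpret e: group_hom "xgrp PP n" "xgrp PP (n - Suc 0)" "xbd PP n"
    using groups_P[of n] groups_P[of "n - Suc 0"] n3 P_bd_top_hom
    unfolding group_hom_def group_hom_axioms_def by simp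
  have sK: "subgroup (kernel (xgrp PP (n - Suc 0)) (xgrp PP (n - 2)) (xbd PP (n - Suc 0))) (xgrp PP (n - Suc 0))"
    by (rule d.subgroup_kernel)
  have gS: "group (Sg PP (n - Suc 0))" unfolding Sg_mid using d.G.subgroup_imp_group[OF sK] .
  have sB: "subgroup (Bd PP (n - Suc 0)) (xgrp PP (n - Suc 0))"
  proof -
    have "n - Suc 0 + 1 = n" using n3 by simp
    then show ?thesis unfolding Bd_def using e.img_is_subgroup by simp
  qed
  have BK: "Bd PP (n - Suc 0) \<subseteq> kernel (xgrp PP (n - Suc 0)) (xgrp PP (n - 2)) (xbd PP (n - Suc 0))"
  proof
    fix z assume "z \<in> Bd PP (n - Suc 0)"
    then obtain m where m: "m \<in> carrier Kn" "z = PMid (NN #>\<^bsub>SD\<^esub> (\<one>\<^bsub>Qm\<^esub>, m))" by (auto simp: Bd_mid)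
    interpret Qm: group Qm by (rule gQm)
    interpret dq: group_hom Qm Q2 "xbd Q (n - Suc 0)"
      using gQm gQ2 bd_mid_hom unfolding group_hom_def group_hom_axioms_def by simp
    have u: "(\<one>\<^bsub>Qm\<^esub>, m) \<in> carrier SD" using m by (simp add: SD_carrier)
    have "theta (\<one>\<^bsub>Qm\<^esub>, m) = \<one>\<^bsub>Q2\<^esub>" by (simp add: theta_def)
    then show "z \<in> kernel (xgrp PP (n - Suc 0)) (xgrp PP (n - 2)) (xbd PP (n - Suc 0))"
      using ker_mid_iff[OF u] m by (simp add: Sg_mid)
  qed
  have sBS: "subgroup (Bd PP (n - Suc 0)) (Sg PP (n - Suc 0))"
    unfolding Sg_mid by (rule d.G.subgroup_incl[OF sB sK BK])
  have comm: "comm_group (Sg PP (n - Suc 0))"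
  proof (rule group.group_comm_groupI[OF gS])
    fix X Y assume X: "X \<in> carrier (Sg PP (n - Suc 0))" and Y: "Y \<in> carrier (Sg PP (n - Suc 0))"
    obtain u where u: "u \<in> carrier SD" "X = PMid (NN #>\<^bsub>SD\<^esub> u)" "theta u = \<one>\<^bsub>Q2\<^esub>"
      using X by (rule ker_mid_cases)
    obtain v where v: "v \<in> carrier SD" "Y = PMid (NN #>\<^bsub>SD\<^esub> v)" "theta v = \<one>\<^bsub>Q2\<^esub>"
      using Y by (rule ker_mid_cases)
    show "X \<otimes>\<^bsub>Sg PP (n - Suc 0)\<^esub> Y = Y \<otimes>\<^bsub>Sg PP (n - Suc 0)\<^esub> X"
      using u v SD_ker_comm[of u v] by (simp add: Sg_mult P_mult_mid rcos_sum_NN)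
  qed
  show ?thesis using gS comm_group.subgroup_imp_normal[OF comm sBS] by simp
qed

end


context PH begin

lemma gQall: "\<forall>k\<in>{1..n}. group (xgrp Q k)" using rxc_grp[OF Q] by simp
lemma gPall: "\<forall>k\<in>{1..n}. group (xgrp PP k)" using groups_P by simp

lemma p_weq: "weq n Q H p" using p by (simp add: tfib_def)

lemma low_iso:
  assumes k: "1 \<le> k" "k < n"
  shows "pi_low_map H phi k \<in> iso (pi_low n PP k) (pi_low n H k)"
proof -
  have okQ: "group (Sg Q k)" "Bd Q k \<lhd> Sg Q k" using rxc_Sg[OF Q k] by auto
  have "pi_low_map H p k \<in> iso (pi_low n Q k) (pi_low n H k)" using p_weq k by (simp add: weq_def)
  then have SQ: "\<forall>y\<in>carrier (Sg H k). \<exists>x\<in>carrier (Sg Q k). Bd H k #>\<^bsub>xgrp H k\<^esub> p k x = Bd H k #>\<^bsub>xgrp H k\<^esub> y"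
    and IQ: "\<forall>x\<in>carrier (Sg Q k). p k x \<in> Bd H k \<longrightarrow> x \<in> Bd Q k"
    using weq_low_iff[OF H pmor gQall k okQ] by auto
  consider "k \<le> n - 2" | "k = n - Suc 0" using k by linarith
  then show ?thesis
  proof cases
    case 1
    have okP: "group (Sg PP k)" "Bd PP k \<lhd> Sg PP k" using Sg_low_ok[OF k(1) 1] by auto
    have cS: "carrier (Sg PP k) = PLow ` carrier (Sg Q k)" using Sg_low[OF k(1) 1] by (simp add: lift_carrier)
    have cB: "Bd PP k = PLow ` Bd Q k" using Bd_low[OF k(1) 1] .
    show ?thesis unfolding weq_low_iff[OF H phi_xmor gPall k okP] cS cB
      using SQ IQ 1 by (auto simp: phi_low)
  next
    case 2
    have okP: "group (Sg PP k)" "Bd PP k \<lhd> Sg PP k" using Sg_mid_ok 2 by auto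
    interpret Hm: group Hm by (rule gHm)
    interpret Qm: group Qm by (rule gQm)
    interpret SD: group SD by (rule group_SD)
    interpret Kn: group Kn by (rule gKn)
    interpret dH: group_hom "xgrp H n" Hm "xbd H n" using rxc_bd_gh[OF H, of n] n3 by simp
    have nk: "n - Suc 0 \<noteq> 1" using n3 by simp
    have carSQ: "carrier (Sg Q (n - Suc 0)) = kernel Qm Q2 (xbd Q (n - Suc 0))"
    proof -
      have "n - Suc 0 - 1 = n - 2" by simp
      then show ?thesis using nk by (simp add: carrier_Sg)
    qed
    have BdQ: "Bd Q (n - Suc 0) = xbd Q n ` carrier (xgrp Q n)"
    proof -
      have "n - Suc 0 + 1 = n" using n3 by simp
      then show ?thesis by (simp add: Bd_def)
    qed
    have BdH: "Bd H (n - Suc 0) = xbd H n ` carrier (xgrp H n)"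
    proof -
      have "n - Suc 0 + 1 = n" using n3 by simp
      then show ?thesis by (simp add: Bd_def)
    qed
    have show_S: "\<forall>y\<in>carrier (Sg H k). \<exists>X\<in>carrier (Sg PP k). Bd H k #>\<^bsub>xgrp H k\<^esub> phi k X = Bd H k #>\<^bsub>xgrp H k\<^esub> y"
    proof
      fix y assume y: "y \<in> carrier (Sg H k)"
      then obtain x where x: "x \<in> carrier (Sg Q k)" "Bd H k #>\<^bsub>xgrp H k\<^esub> p k x = Bd H k #>\<^bsub>xgrp H k\<^esub> y"
        using SQ by blast
      have xq: "x \<in> carrier Qm" "xbd Q (n - Suc 0) x = \<one>\<^bsub>Q2\<^esub>" using x(1) 2 carSQ by (auto simp: kernel_def)
      have u: "(x, \<one>\<^bsub>Kn\<^esub>) \<in> carrier SD" using xq by (simp add: SD_carrier del: xgrp_xprod)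
      have th: "theta (x, \<one>\<^bsub>Kn\<^esub>) = \<one>\<^bsub>Q2\<^esub>" using xq by (simp add: theta_def)
      have X: "PMid (NN #>\<^bsub>SD\<^esub> (x, \<one>\<^bsub>Kn\<^esub>)) \<in> carrier (Sg PP k)" using ker_mid_iff[OF u] th 2 by simp
      have "phi k (PMid (NN #>\<^bsub>SD\<^esub> (x, \<one>\<^bsub>Kn\<^esub>))) = p k x"
        using 2 u xq pa_closed[of x] by (simp add: phi_coset psi_def)
      then show "\<exists>X\<in>carrier (Sg PP k). Bd H k #>\<^bsub>xgrp H k\<^esub> phi k X = Bd H k #>\<^bsub>xgrp H k\<^esub> y"
        using X x(2) by metis
    qed
    have show_I: "\<forall>X\<in>carrier (Sg PP k). phi k X \<in> Bd H k \<longrightarrow> X \<in> Bd PP k"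
    proof (intro ballI impI)
      fix X assume X: "X \<in> carrier (Sg PP k)" and pX: "phi k X \<in> Bd H k"
      obtain u where u: "u \<in> carrier SD" "X = PMid (NN #>\<^bsub>SD\<^esub> u)" "theta u = \<one>\<^bsub>Q2\<^esub>"
        using X 2 by (metis ker_mid_cases)
      obtain a b c where abc: "u = (a, (b, c))" "a \<in> carrier Qm" "b \<in> carrier (xgrp H n)" "c \<in> carrier (xgrp G n)"
        using u by (auto simp: SD_carrier)
      have ta: "xbd Q (n - Suc 0) a = \<one>\<^bsub>Q2\<^esub>" using u abc by (simp add: theta_def)
      have sBH: "subgroup (Bd H (n - Suc 0)) Hm" unfolding BdH using dH.img_is_subgroup .
      have psiu: "psi u \<in> Bd H (n - Suc 0)" using pX u 2 by (simp add: phi_coset)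
      have db: "xbd H n b \<in> Bd H (n - Suc 0)" using abc BdH by simp
      have pa: "p (n - Suc 0) a \<in> carrier Hm" using pa_closed abc by simp
      have dbc: "xbd H n b \<in> carrier Hm" using abc by simp
      have "p (n - Suc 0) a = psi u \<otimes>\<^bsub>Hm\<^esub> inv\<^bsub>Hm\<^esub> (xbd H n b)"
        using abc pa dbc by (simp add: psi_def Hm.m_assoc)
      then have "p (n - Suc 0) a \<in> Bd H (n - Suc 0)"
        using psiu db subgroup.m_closed[OF sBH] subgroup.m_inv_closed[OF sBH] by simp
      moreover have "a \<in> carrier (Sg Q (n - Suc 0))" using abc ta carSQ by (simp add: kernel_def)
      ultimately have "a \<in> Bd Q (n - Suc 0)" using IQ 2 by simp
      then obtain x where x: "x \<in> carrier (xgrp Q n)" "a = xbd Q n x" using BdQ by auto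
      define m'' where "m'' = alpha a (npair p f n x) \<otimes>\<^bsub>Kn\<^esub> (b, c)"
      have bc: "(b, c) \<in> carrier Kn" using abc by simp
      have m'': "m'' \<in> carrier Kn" unfolding m''_def
        by (rule Kn.m_closed[OF alpha_closed[OF abc(2) nabn_closed[OF x(1)]] bc])
      have "gN x \<otimes>\<^bsub>SD\<^esub> u = (\<one>\<^bsub>Qm\<^esub>, m'')"
        using x abc by (simp add: gN_def SD_mult m''_def)
      moreover have "gN x \<in> NN" using x by (simp add: NN_eq)
      ultimately have "(\<one>\<^bsub>Qm\<^esub>, m'') \<in> NN #>\<^bsub>SD\<^esub> u"
        unfolding r_coset_def by force
      then have "NN #>\<^bsub>SD\<^esub> u = NN #>\<^bsub>SD\<^esub> (\<one>\<^bsub>Qm\<^esub>, m'')"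
        using SD.repr_independence[OF _ u(1) subgroup_NN] by simp
      then show "X \<in> Bd PP k" using u m'' 2 by (auto simp: Bd_mid)
    qed
    show ?thesis unfolding weq_low_iff[OF H phi_xmor gPall k okP] using show_S show_I by blast
  qed
qed

end


context PH begin

lemma kerP:
  "kernel (xgrp PP n) (xgrp PP (n - Suc 0)) (xbd PP n) =
   (\<lambda>x. PTop (p n x, f n x)) ` kernel (xgrp Q n) Qm (xbd Q n)"
proof -
  interpret Qm: group Qm by (rule gQm)
  interpret SD: group SD by (rule group_SD)
  have one_mid: "\<one>\<^bsub>xgrp PP (n - Suc 0)\<^esub> = PMid NN" by (simp add: P_grp_mid lift_one PQ_one)
  show ?thesis
  proof
    show "kernel (xgrp PP n) (xgrp PP (n - Suc 0)) (xbd PP n) \<subseteq> (\<lambda>x. PTop (p n x, f n x)) ` kernel (xgrp Q n) Qm (xbd Q n)"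
    proof
      fix X assume X: "X \<in> kernel (xgrp PP n) (xgrp PP (n - Suc 0)) (xbd PP n)"
      then obtain m where m: "m \<in> carrier Kn" "X = PTop m" by (auto simp: kernel_def P_car_top)
      have u: "(\<one>\<^bsub>Qm\<^esub>, m) \<in> carrier SD" using m by (simp add: SD_carrier del: xgrp_xprod)
      have "NN #>\<^bsub>SD\<^esub> (\<one>\<^bsub>Qm\<^esub>, m) = NN" using X m one_mid by (simp add: kernel_def P_bd_top)
      then have "(\<one>\<^bsub>Qm\<^esub>, m) \<in> NN" using SD.coset_join1[OF _ u subgroup_NN] by simp
      then obtain x where x: "x \<in> carrier (xgrp Q n)" "(\<one>\<^bsub>Qm\<^esub>, m) = gN x" by (auto simp: NN_eq)
      have "inv\<^bsub>Qm\<^esub> (xbd Q n x) = \<one>\<^bsub>Qm\<^esub>" and mx: "m = npair p f n x" using x by (auto simp: gN_def)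
      then have "xbd Q n x = \<one>\<^bsub>Qm\<^esub>" using bdn_closed[OF x(1)] by simp
      then have "x \<in> kernel (xgrp Q n) Qm (xbd Q n)" using x by (simp add: kernel_def)
      then show "X \<in> (\<lambda>x. PTop (p n x, f n x)) ` kernel (xgrp Q n) Qm (xbd Q n)"
        using m mx by (auto simp: npair_app)
    qed
  next
    show "((\<lambda>x. PTop (p n x, f n x)) ` kernel (xgrp Q n) Qm (xbd Q n) :: ('q, 'h \<times> 'g) po set) \<subseteq> kernel (xgrp PP n) (xgrp PP (n - Suc 0)) (xbd PP n)"
    proof
      fix X :: "('q, 'h \<times> 'g) po" assume "X \<in> (\<lambda>x. PTop (p n x, f n x)) ` kernel (xgrp Q n) Qm (xbd Q n)"
      then obtain x where x: "x \<in> carrier (xgrp Q n)" "xbd Q n x = \<one>\<^bsub>Qm\<^esub>" "X = PTop (p n x, f n x)"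
        by (auto simp: kernel_def)
      have m: "npair p f n x \<in> carrier Kn" using nabn_closed[OF x(1)] .
      have u: "(\<one>\<^bsub>Qm\<^esub>, npair p f n x) \<in> carrier SD" using m by (simp add: SD_carrier del: xgrp_xprod)
      have "gN x = (\<one>\<^bsub>Qm\<^esub>, npair p f n x)" using x by (simp add: gN_def)
      then have "(\<one>\<^bsub>Qm\<^esub>, npair p f n x) \<in> NN" using x by (metis NN_eq image_eqI)
      then have "NN #>\<^bsub>SD\<^esub> (\<one>\<^bsub>Qm\<^esub>, npair p f n x) = NN" using SD.coset_join2[OF u subgroup_NN] by simp
      then show "X \<in> kernel (xgrp PP n) (xgrp PP (n - Suc 0)) (xbd PP n)"
        using x m one_mid by (simp add: kernel_def P_bd_top P_car_top npair_app)
    qed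
  qed
qed

lemma top_iso: "phi n \<in> iso (pi_top n PP) (pi_top n H)"
proof -
  have pi: "p n \<in> iso (pi_top n Q) (pi_top n H)" using p_weq by (simp add: weq_def)
  then have bij: "bij_betw (p n) (kernel (xgrp Q n) Qm (xbd Q n)) (kernel (xgrp H n) Hm (xbd H n))"
    by (simp add: iso_def pi_top_def)
  have cP: "carrier (pi_top n PP) = (\<lambda>x. PTop (p n x, f n x)) ` kernel (xgrp Q n) Qm (xbd Q n)"
    by (simp add: pi_top_def kerP)
  have cH: "carrier (pi_top n H) = kernel (xgrp H n) Hm (xbd H n)" by (simp add: pi_top_def)
  have img: "phi n ` carrier (pi_top n PP) = carrier (pi_top n H)"
    using bij unfolding cP cH bij_betw_def by (simp add: image_image phi_top)
  have inj: "inj_on (phi n) (carrier (pi_top n PP))"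
    using bij unfolding cP bij_betw_def inj_on_def by (auto simp: phi_top)
  have sub: "carrier (pi_top n PP) \<subseteq> carrier (xgrp PP n)" by (auto simp: pi_top_def kernel_def)
  have hom: "phi n \<in> hom (pi_top n PP) (pi_top n H)"
  proof (rule homI)
    fix x assume "x \<in> carrier (pi_top n PP)"
    then show "phi n x \<in> carrier (pi_top n H)" using img by blast
  next
    fix x y assume "x \<in> carrier (pi_top n PP)" "y \<in> carrier (pi_top n PP)"
    then show "phi n (x \<otimes>\<^bsub>pi_top n PP\<^esub> y) = phi n x \<otimes>\<^bsub>pi_top n H\<^esub> phi n y"
      using sub phi_hom[of n] n3 by (auto simp: pi_top_def hom_def)
  qed
  show ?thesis using hom img inj by (simp add: iso_def bij_betw_def)
qed

lemma main: "tfib n PP H phi"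
  unfolding tfib_def weq_def using phi_fib phi_xmor low_iso top_iso by auto

end

theorem mainTheorem2:
  fixes n :: nat
    and Q :: "'q xcx" and H :: "'h xcx" and G :: "'g xcx"
    and p :: "nat \<Rightarrow> 'q \<Rightarrow> 'h" and f :: "nat \<Rightarrow> 'q \<Rightarrow> 'g"
  assumes "n \<ge> 3"
    and "rxc n Q" and "rxc n H" and "rxc n G"
    and "tfib n Q H p"
    and "xmor n Q G f"
  shows "tfib n (pushout n Q (xprod H G) (npair p f)) H
           (xcomp proj1 (po_rho n Q (xprod H G) (npair p f)))"
proof -
  interpret PH n Q H G p f by unfold_locales (use assms in auto)
  show ?thesis by (rule main)
qed


end
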